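(* Let $\mathcal H$ be a family of graphs. The following are equivalent: (i) there is a constant $c=c(\mathcal H)$ such that every (not necessarily connected) $\mathcal H$-free graph $G$ has fewer than $c$ vertices $v$ for which $G[N(v)]$ has at least $2$ connected components; (ii) there is a positive integer $n$ such that $\mathcal H\le \{K_n^*,\ nP_3,\ K_{1,n}^*,\ K_{2,n},\ CK_n,\ T_n\}$.
   Context: All graphs are finite, simple, undirected. For graphs $H_1,H_2$, write $H_1\prec H_2$ if $H_2$ contains an induced subgraph isomorphic to $H_1$. A graph $G$ is $\mathcal H$-free if no $H\in\mathcal H$ satisfies $H\prec G$. For families $\mathcal H_1,\mathcal H_2$, write $\mathcal H_1\le\mathcal H_2$ if for every $H_2\in\mathcal H_2$ there is $H_1\in\mathcal H_1$ with $H_1\prec H_2$. $N(v)$ is the neighborhood and $G[S]$ the induced subgraph. $K_n$, $E_n$, $P_n$ are the complete graph, edgeless graph, and path on $n$ vertices; $K_{s,t}$ is the complete bipartite graph; $nG$ is the disjoint union of $n$ copies of $G$; $G_1+G_2$ is the join. $K_{1,n}^*$ is obtained from the star $K_{1,n}$ by attaching a new pendant vertex to each leaf; $K_n^*$ is obtained from $K_n$ by attaching a new pendant vertex to each vertex; $CK_n$ is obtained from two disjoint copies of $K_n$ by adding a perfect matching between them; $T_n$ is obtained from the join $K_n+E_n$ by adding one new vertex adjacent to exactly the $n$ vertices of $E_n$. *)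

theory Defs
  imports Main
begin

type_synonym 'a graph = "'a set \<times> ('a \<times> 'a) set"

definition verts :: "'a graph \<Rightarrow> 'a set" where "verts G = fst G"
definition edges :: "'a graph \<Rightarrow> ('a \<times> 'a) set" where "edges G = snd G"

definition wf_graph :: "'a graph \<Rightarrow> bool" where
  "wf_graph G \<longleftrightarrow> finite (verts G) \<and> edges G \<subseteq> verts G \<times> verts G
     \<and> (\<forall>x y. (x, y) \<in> edges G \<longrightarrow> (y, x) \<in> edges G)
     \<and> (\<forall>x. (x, x) \<notin> edges G)"

definition induced_sub :: "'a graph \<Rightarrow> 'b graph \<Rightarrow> bool" (infix "\<prec>" 50) where
  "H \<prec> G \<longleftrightarrow> (\<exists>f. inj_on f (verts H) \<and> f ` verts H \<subseteq> verts G \<and>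
      (\<forall>x\<in>verts H. \<forall>y\<in>verts H. ((x, y) \<in> edges H \<longleftrightarrow> (f x, f y) \<in> edges G)))"

definition H_free :: "'a graph set \<Rightarrow> 'b graph \<Rightarrow> bool" where
  "H_free \<H> G \<longleftrightarrow> (\<forall>H\<in>\<H>. \<not> H \<prec> G)"

definition family_le :: "'a graph set \<Rightarrow> 'b graph set \<Rightarrow> bool" where
  "family_le \<H>1 \<H>2 \<longleftrightarrow> (\<forall>H2\<in>\<H>2. \<exists>H1\<in>\<H>1. H1 \<prec> H2)"

definition nbhd :: "'a graph \<Rightarrow> 'a \<Rightarrow> 'a set" where
  "nbhd G v = {u \<in> verts G. (v, u) \<in> edges G}"

definition induced :: "'a graph \<Rightarrow> 'a set \<Rightarrow> 'a graph" where
  "induced G S = (S, edges G \<inter> (S \<times> S))"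

definition components :: "'a graph \<Rightarrow> 'a set set" where
  "components G = (\<lambda>x. {y \<in> verts G. (x, y) \<in> (edges G \<inter> (verts G \<times> verts G))\<^sup>*}) ` verts G"

definition mk_graph :: "nat set \<Rightarrow> (nat \<Rightarrow> nat \<Rightarrow> bool) \<Rightarrow> nat graph" where
  "mk_graph V P = (V, {(x, y). x \<in> V \<and> y \<in> V \<and> x \<noteq> y \<and> (P x y \<or> P y x)})"

text \<open>K_n^*: clique on 0..n-1, pendant vertex i+n attached to i.\<close>
definition Kstar :: "nat \<Rightarrow> nat graph" where
  "Kstar n = mk_graph {..<2*n} (\<lambda>x y. (x < n \<and> y < n) \<or> (x < n \<and> y = x + n))"

text \<open>n P_3: paths 3k - 3k+1 - 3k+2 for k < n.\<close>
definition nP3 :: "nat \<Rightarrow> nat graph" where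
  "nP3 n = mk_graph {..<3*n} (\<lambda>x y. x div 3 = y div 3 \<and> x mod 3 = 1)"

text \<open>K_{1,n}^*: centre 0, leaves 1..n, pendant i+n attached to leaf i.\<close>
definition K1nstar :: "nat \<Rightarrow> nat graph" where
  "K1nstar n = mk_graph {..2*n} (\<lambda>x y. (x = 0 \<and> 1 \<le> y \<and> y \<le> n) \<or> (1 \<le> x \<and> x \<le> n \<and> y = x + n))"

definition K2n :: "nat \<Rightarrow> nat graph" where
  "K2n n = mk_graph {..n+1} (\<lambda>x y. x < 2 \<and> 2 \<le> y)"

text \<open>CK_n: cliques on {0..<n} and {n..<2n} plus matching i -- i+n.\<close>
definition CK :: "nat \<Rightarrow> nat graph" where
  "CK n = mk_graph {..<2*n} (\<lambda>x y. (x < n \<and> y < n) \<or> (n \<le> x \<and> n \<le> y) \<or> (x < n \<and> y = x + n))"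

text \<open>T_n: K_n on {0..<n} joined to E_n on {n..<2n}, plus vertex 2n adjacent to {n..<2n}.\<close>
definition Tn :: "nat \<Rightarrow> nat graph" where
  "Tn n = mk_graph {..2*n} (\<lambda>x y. (x < n \<and> y < n) \<or> (x < n \<and> n \<le> y \<and> y < 2*n)
                              \<or> (n \<le> x \<and> x < 2*n \<and> y = 2*n))"

end

theory Submission
  imports Defs "HOL-Library.Ramsey"
begin


lemma sorted_enum:
  fixes H :: "nat set"
  assumes "finite H" "card H = k"
  shows "(\<forall>i<k. sorted_list_of_set H ! i \<in> H) \<and>
         (\<forall>i j. i < j \<longrightarrow> j < k \<longrightarrow> sorted_list_of_set H ! i < sorted_list_of_set H ! j)"
proof -
  have L: "length (sorted_list_of_set H) = k" using assms by simp
  have S: "sorted_wrt (<) (sorted_list_of_set H)" by simp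
  show ?thesis
    using L S assms by (auto simp: sorted_wrt_nth_less) (metis L nth_mem set_sorted_list_of_set)
qed

lemma ramsey_seq:
  fixes k :: nat
  shows "\<exists>N. \<forall>(S::nat set) (col::nat \<Rightarrow> nat \<Rightarrow> 'b::finite). finite S \<longrightarrow> N \<le> card S \<longrightarrow>
     (\<exists>s. (\<forall>i<k. s i \<in> S) \<and> (\<forall>i j. i < j \<longrightarrow> j < k \<longrightarrow> s i \<noteq> s j) \<and>
          (\<forall>i j i' j'. i < j \<longrightarrow> j < k \<longrightarrow> i' < j' \<longrightarrow> j' < k \<longrightarrow> col (s i) (s j) = col (s i') (s j')))"
proof -
  obtain N :: nat where N: "partn_lst {..<N} (replicate (card (UNIV::'b set)) k) 2"
    using ramsey_full[of "replicate (card (UNIV::'b set)) k" 2] by blast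
  obtain g :: "'b \<Rightarrow> nat" where g: "bij_betw g UNIV {0..<card (UNIV::'b set)}"
    using ex_bij_betw_finite_nat[of "UNIV :: 'b set"] by auto
  have ginj: "g x = g y \<Longrightarrow> x = y" for x y using g by (auto simp: bij_betw_def inj_on_def)
  show ?thesis
  proof (rule exI[of _ N], intro allI impI)
    fix S :: "nat set" and col :: "nat \<Rightarrow> nat \<Rightarrow> 'b"
    assume fS: "finite S" and NS: "N \<le> card S"
    obtain e where e: "bij_betw e {0..<card S} S" using ex_bij_betw_nat_finite[OF fS] by auto
    have einj: "a < N \<Longrightarrow> b < N \<Longrightarrow> e a = e b \<Longrightarrow> a = b" for a b
      using e NS by (auto simp: bij_betw_def inj_on_def)
    have emem: "a < N \<Longrightarrow> e a \<in> S" for a using e NS by (auto simp: bij_betw_def)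
    define f where "f A = g (col (e (Min A)) (e (Max A)))" for A
    have fin: "f \<in> nsets {..<N} 2 \<rightarrow> {..<length (replicate (card (UNIV::'b set)) k)}"
      using g by (auto simp: f_def bij_betw_def)
    obtain i H where i: "i < length (replicate (card (UNIV::'b set)) k)"
      and H: "H \<in> nsets {..<N} (replicate (card (UNIV::'b set)) k ! i)" and hom: "f ` (nsets H 2) \<subseteq> {i}"
      using partn_lstE[OF N fin refl] by blast
    have Hk: "finite H" "card H = k" "H \<subseteq> {..<N}" using H i by (auto simp: nsets_def)
    define h where "h j = sorted_list_of_set H ! j" for j
    have hH: "\<forall>j<k. h j \<in> H" and hm: "\<forall>a b. a < b \<longrightarrow> b < k \<longrightarrow> h a < h b"
      using sorted_enum[OF Hk(1,2)] unfolding h_def by auto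
    have key: "a < b \<Longrightarrow> b < k \<Longrightarrow> g (col (e (h a)) (e (h b))) = i" for a b
    proof -
      assume ab: "a < b" "b < k"
      have "h a < h b" using hm ab by auto
      moreover have "{h a, h b} \<in> nsets H 2" using hH ab \<open>h a < h b\<close> by (auto simp: nsets_def card_insert_if)
      ultimately have "f {h a, h b} = i" using hom by blast
      moreover have "Min {h a, h b} = h a" "Max {h a, h b} = h b" using \<open>h a < h b\<close> by auto
      ultimately show ?thesis by (simp add: f_def)
    qed
    show "\<exists>s. (\<forall>i<k. s i \<in> S) \<and> (\<forall>i j. i < j \<longrightarrow> j < k \<longrightarrow> s i \<noteq> s j) \<and>
          (\<forall>i j i' j'. i < j \<longrightarrow> j < k \<longrightarrow> i' < j' \<longrightarrow> j' < k \<longrightarrow> col (s i) (s j) = col (s i') (s j'))"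
    proof (intro exI[of _ "\<lambda>j. e (h j)"] conjI allI impI)
      fix j assume "j < k" then show "e (h j) \<in> S" using hH Hk emem by auto
    next
      fix a b assume "a < b" "b < k"
      then show "e (h a) \<noteq> e (h b)" using hm hH Hk einj by (metis less_irrefl lessThan_iff less_trans subsetD)
    next
      fix a b a' b' assume "a < b" "b < k" "a' < b'" "b' < k"
      then show "col (e (h a)) (e (h b)) = col (e (h a')) (e (h b'))"
        using key ginj by metis
    qed
  qed
qed


lemma mk_verts[simp]: "verts (mk_graph V P) = V" by (simp add: mk_graph_def verts_def)
lemma mk_edges[simp]: "edges (mk_graph V P) = {(x, y). x \<in> V \<and> y \<in> V \<and> x \<noteq> y \<and> (P x y \<or> P y x)}"
  by (simp add: mk_graph_def edges_def)

lemma wf_sym: "wf_graph G \<Longrightarrow> (x, y) \<in> edges G \<longleftrightarrow> (y, x) \<in> edges G"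
  by (auto simp: wf_graph_def)
lemma wf_irr: "wf_graph G \<Longrightarrow> (x, x) \<notin> edges G"
  by (auto simp: wf_graph_def)
lemma wf_V: "wf_graph G \<Longrightarrow> (x, y) \<in> edges G \<Longrightarrow> x \<in> verts G \<and> y \<in> verts G"
  by (auto simp: wf_graph_def)

lemma emb_intro:
  assumes "inj_on f (verts H)" "f ` verts H \<subseteq> verts G"
    "\<And>x y. x \<in> verts H \<Longrightarrow> y \<in> verts H \<Longrightarrow> (x, y) \<in> edges H \<longleftrightarrow> (f x, f y) \<in> edges G"
  shows "induced_sub H G"
  using assms unfolding induced_sub_def by blast

lemma emb_trans:
  assumes "induced_sub A B" "induced_sub B C" shows "induced_sub A C"
proof -
  obtain f where f: "inj_on f (verts A)" "f ` verts A \<subseteq> verts B"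
    "\<forall>x\<in>verts A. \<forall>y\<in>verts A. ((x, y) \<in> edges A \<longleftrightarrow> (f x, f y) \<in> edges B)"
    using assms(1) unfolding induced_sub_def by blast
  obtain g where g: "inj_on g (verts B)" "g ` verts B \<subseteq> verts C"
    "\<forall>x\<in>verts B. \<forall>y\<in>verts B. ((x, y) \<in> edges B \<longleftrightarrow> (g x, g y) \<in> edges C)"
    using assms(2) unfolding induced_sub_def by blast
  show ?thesis unfolding induced_sub_def
    by (rule exI[of _ "g \<circ> f"]) (use f g in \<open>auto simp: inj_on_def subset_iff\<close>)
qed

definition found :: "nat graph \<Rightarrow> nat \<Rightarrow> bool" where
  "found G n \<longleftrightarrow> induced_sub (Kstar n) G \<or> induced_sub (nP3 n) G \<or> induced_sub (K1nstar n) G \<or> induced_sub (K2n n) G \<or> induced_sub (CK n) G"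

lemma emb_Kstar:
  assumes wf: "wf_graph G"
    and cV: "\<forall>i<n. c i \<in> verts G" and pV: "\<forall>i<n. p i \<in> verts G"
    and cc: "\<forall>i<n. \<forall>j<n. i \<noteq> j \<longrightarrow> (c i, c j) \<in> edges G"
    and pp: "\<forall>i<n. \<forall>j<n. i \<noteq> j \<longrightarrow> (p i, p j) \<notin> edges G"
    and cp: "\<forall>i<n. \<forall>j<n. (c i, p j) \<in> edges G \<longleftrightarrow> i = j"
  shows "induced_sub (Kstar n) G"
proof -
  define f where "f x = (if x < n then c x else p (x - n))" for x
  have sy: "(x, y) \<in> edges G \<longleftrightarrow> (y, x) \<in> edges G" for x y using wf_sym[OF wf] .
  have ir: "(x, x) \<notin> edges G" for x using wf_irr[OF wf] .
  show ?thesis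
  proof (rule emb_intro[where f = f])
    show "inj_on f (verts (Kstar n))"
    proof (rule inj_onI)
      fix x y assume x: "x \<in> verts (Kstar n)" and y: "y \<in> verts (Kstar n)" and e: "f x = f y"
      have x2: "x < 2*n" and y2: "y < 2*n" using x y by (auto simp: Kstar_def)
      show "x = y"
      proof (cases "x < n"; cases "y < n")
        assume "x < n" "y < n" then show ?thesis using e cc ir by (auto simp: f_def) metis
      next
        assume a: "x < n" "\<not> y < n"
        then have "c x = p (y - n)" using e by (simp add: f_def)
        moreover have "y - n < n" using y2 a by auto
        ultimately show ?thesis using cp pp ir sy a
          by (metis)
      next
        assume a: "\<not> x < n" "y < n"
        then have "c y = p (x - n)" using e by (simp add: f_def)
        moreover have "x - n < n" using x2 a by auto
        ultimately show ?thesis using cp pp ir sy a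
          by (metis)
      next
        assume a: "\<not> x < n" "\<not> y < n"
        then have "p (x - n) = p (y - n)" using e by (simp add: f_def)
        moreover have "x - n < n" "y - n < n" using x2 y2 a by auto
        ultimately have "x - n = y - n" using cp by metis
        then show ?thesis using a by auto
      qed
    qed
  next
    show "f ` verts (Kstar n) \<subseteq> verts G"
      using cV pV by (auto simp: Kstar_def f_def)
  next
    fix x y assume x: "x \<in> verts (Kstar n)" and y: "y \<in> verts (Kstar n)"
    have x2: "x < 2*n" and y2: "y < 2*n" using x y by (auto simp: Kstar_def)
    show "(x, y) \<in> edges (Kstar n) \<longleftrightarrow> (f x, f y) \<in> edges G"
    proof (cases "x < n"; cases "y < n")
      assume "x < n" "y < n" then show ?thesis using cc ir by (auto simp: f_def Kstar_def)
    next
      assume a: "x < n" "\<not> y < n"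
      then have "y - n < n" using y2 by auto
      then show ?thesis using a cp x2 y2 by (auto simp: f_def Kstar_def)
    next
      assume a: "\<not> x < n" "y < n"
      then have "x - n < n" using x2 by auto
      then show ?thesis using a cp sy x2 y2 by (auto simp: f_def Kstar_def)
    next
      assume a: "\<not> x < n" "\<not> y < n"
      then have "x - n < n" "y - n < n" using x2 y2 by auto
      then show ?thesis using a pp ir by (auto simp: f_def Kstar_def) (metis diff_diff_cancel less_imp_le_nat not_less)
    qed
  qed
qed


lemma emb_CK:
  assumes wf: "wf_graph G"
    and cV: "\<forall>i<n. c i \<in> verts G" and pV: "\<forall>i<n. p i \<in> verts G"
    and cc: "\<forall>i<n. \<forall>j<n. i \<noteq> j \<longrightarrow> (c i, c j) \<in> edges G"
    and pp: "\<forall>i<n. \<forall>j<n. i \<noteq> j \<longrightarrow> (p i, p j) \<in> edges G"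
    and cp: "\<forall>i<n. \<forall>j<n. (c i, p j) \<in> edges G \<longleftrightarrow> i = j"
    and dis: "\<forall>i<n. \<forall>j<n. c i \<noteq> p j"
  shows "induced_sub (CK n) G"
proof -
  define f where "f x = (if x < n then c x else p (x - n))" for x
  have sy: "(x, y) \<in> edges G \<longleftrightarrow> (y, x) \<in> edges G" for x y using wf_sym[OF wf] .
  have ir: "(x, x) \<notin> edges G" for x using wf_irr[OF wf] .
  show ?thesis
  proof (rule emb_intro[where f = f])
    show "inj_on f (verts (CK n))"
    proof (rule inj_onI)
      fix x y assume x: "x \<in> verts (CK n)" and y: "y \<in> verts (CK n)" and e: "f x = f y"
      have x2: "x < 2*n" and y2: "y < 2*n" using x y by (auto simp: CK_def)
      show "x = y"
      proof (cases "x < n"; cases "y < n")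
        assume "x < n" "y < n" then show ?thesis using e cc ir by (auto simp: f_def) metis
      next
        assume a: "x < n" "\<not> y < n"
        then have "c x = p (y - n)" using e by (simp add: f_def)
        moreover have "y - n < n" using y2 a by auto
        ultimately show ?thesis using dis a by metis
      next
        assume a: "\<not> x < n" "y < n"
        then have "c y = p (x - n)" using e by (simp add: f_def)
        moreover have "x - n < n" using x2 a by auto
        ultimately show ?thesis using dis a by metis
      next
        assume a: "\<not> x < n" "\<not> y < n"
        then have "p (x - n) = p (y - n)" using e by (simp add: f_def)
        moreover have "x - n < n" "y - n < n" using x2 y2 a by auto
        ultimately have "x - n = y - n" using pp ir by metis
        then show ?thesis using a by auto
      qed
    qed
  next
    show "f ` verts (CK n) \<subseteq> verts G"
      using cV pV by (auto simp: CK_def f_def)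
  next
    fix x y assume x: "x \<in> verts (CK n)" and y: "y \<in> verts (CK n)"
    have x2: "x < 2*n" and y2: "y < 2*n" using x y by (auto simp: CK_def)
    show "(x, y) \<in> edges (CK n) \<longleftrightarrow> (f x, f y) \<in> edges G"
    proof (cases "x < n"; cases "y < n")
      assume "x < n" "y < n" then show ?thesis using cc ir by (auto simp: f_def CK_def)
    next
      assume a: "x < n" "\<not> y < n"
      then have "y - n < n" using y2 by auto
      then show ?thesis using a cp x2 y2 by (auto simp: f_def CK_def)
    next
      assume a: "\<not> x < n" "y < n"
      then have "x - n < n" using x2 by auto
      then show ?thesis using a cp sy x2 y2 by (auto simp: f_def CK_def)
    next
      assume a: "\<not> x < n" "\<not> y < n"
      then have "x - n < n" "y - n < n" using x2 y2 by auto
      then show ?thesis using a pp ir x2 y2 by (auto simp: f_def CK_def)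
    qed
  qed
qed

lemma emb_K2n:
  assumes wf: "wf_graph G"
    and xV: "x0 \<in> verts G" and yV: "y0 \<in> verts G" and sV: "\<forall>i<n. s i \<in> verts G"
    and xy: "x0 \<noteq> y0" "(x0, y0) \<notin> edges G"
    and xs: "\<forall>i<n. (x0, s i) \<in> edges G" and ys: "\<forall>i<n. (y0, s i) \<in> edges G"
    and ss: "\<forall>i<n. \<forall>j<n. i \<noteq> j \<longrightarrow> (s i, s j) \<notin> edges G \<and> s i \<noteq> s j"
  shows "induced_sub (K2n n) G"
proof -
  define f where "f z = (if z = 0 then x0 else if z = 1 then y0 else s (z - 2))" for z
  have sy: "(x, y) \<in> edges G \<longleftrightarrow> (y, x) \<in> edges G" for x y using wf_sym[OF wf] .
  have ir: "(x, x) \<notin> edges G" for x using wf_irr[OF wf] .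
  have xs': "x0 \<noteq> s i" "y0 \<noteq> s i" if "i < n" for i using xs ys ir that by metis+
  show ?thesis
  proof (rule emb_intro[where f = f])
    show "inj_on f (verts (K2n n))"
    proof (rule inj_onI)
      fix x y assume x: "x \<in> verts (K2n n)" and y: "y \<in> verts (K2n n)" and e: "f x = f y"
      have x2: "2 \<le> x \<Longrightarrow> x - 2 < n" "2 \<le> y \<Longrightarrow> y - 2 < n" using x y by (auto simp: K2n_def)
      show "x = y"
      proof (cases "x < 2"; cases "y < 2")
        assume "x < 2" "y < 2" then show ?thesis using e xy unfolding f_def
          by (auto simp: less_2_cases_iff)
      next
        assume a: "x < 2" "\<not> y < 2"
        then have "f y = s (y - 2)" "y - 2 < n" using x2 by (auto simp: f_def)
        moreover have "f x = x0 \<or> f x = y0" using a by (auto simp: f_def)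
        ultimately show ?thesis using e xs' by metis
      next
        assume a: "\<not> x < 2" "y < 2"
        then have "f x = s (x - 2)" "x - 2 < n" using x2 by (auto simp: f_def)
        moreover have "f y = x0 \<or> f y = y0" using a by (auto simp: f_def)
        ultimately show ?thesis using e xs' by metis
      next
        assume a: "\<not> x < 2" "\<not> y < 2"
        then have "s (x - 2) = s (y - 2)" using e unfolding f_def by auto
        then have "x - 2 = y - 2" using ss x2 a by (meson not_less)
        then show ?thesis using a by auto
      qed
    qed
  next
    show "f ` verts (K2n n) \<subseteq> verts G"
      using xV yV sV by (auto simp: K2n_def f_def)
  next
    fix x y assume x: "x \<in> verts (K2n n)" and y: "y \<in> verts (K2n n)"
    have x2: "2 \<le> x \<Longrightarrow> x - 2 < n" "2 \<le> y \<Longrightarrow> y - 2 < n" using x y by (auto simp: K2n_def)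
    have xn: "x \<le> n + 1" "y \<le> n + 1" using x y by (auto simp: K2n_def)
    have EH: "(x, y) \<in> edges (K2n n) \<longleftrightarrow> x \<noteq> y \<and> ((x < 2 \<and> 2 \<le> y) \<or> (y < 2 \<and> 2 \<le> x))"
      using xn by (auto simp: K2n_def)
    show "(x, y) \<in> edges (K2n n) \<longleftrightarrow> (f x, f y) \<in> edges G"
    proof (cases "x < 2"; cases "y < 2")
      assume a: "x < 2" "y < 2"
      then have "(x = 0 \<or> x = 1) \<and> (y = 0 \<or> y = 1)" by auto
      then show ?thesis using EH a xy ir sy unfolding f_def by auto
    next
      assume a: "x < 2" "\<not> y < 2"
      then have "f y = s (y - 2)" "y - 2 < n" using x2 by (auto simp: f_def)
      moreover have "f x = x0 \<or> f x = y0" using a by (auto simp: f_def)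
      ultimately show ?thesis using EH a xs ys by auto
    next
      assume a: "\<not> x < 2" "y < 2"
      then have "f x = s (x - 2)" "x - 2 < n" using x2 by (auto simp: f_def)
      moreover have "f y = x0 \<or> f y = y0" using a by (auto simp: f_def)
      ultimately show ?thesis using EH a xs ys sy by auto
    next
      assume a: "\<not> x < 2" "\<not> y < 2"
      then have "f x = s (x - 2)" "x - 2 < n" "f y = s (y - 2)" "y - 2 < n" using x2 by (auto simp: f_def)
      then show ?thesis using EH a ss ir by (metis (no_types, lifting))
    qed
  qed
qed


lemma emb_K1nstar:
  assumes wf: "wf_graph G"
    and xV: "x0 \<in> verts G" and cV: "\<forall>i<n. c i \<in> verts G" and pV: "\<forall>i<n. p i \<in> verts G"
    and xc: "\<forall>i<n. (x0, c i) \<in> edges G" and xp: "\<forall>i<n. (x0, p i) \<notin> edges G \<and> x0 \<noteq> p i"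
    and cc: "\<forall>i<n. \<forall>j<n. i \<noteq> j \<longrightarrow> (c i, c j) \<notin> edges G"
    and pp: "\<forall>i<n. \<forall>j<n. i \<noteq> j \<longrightarrow> (p i, p j) \<notin> edges G"
    and cp: "\<forall>i<n. \<forall>j<n. (c i, p j) \<in> edges G \<longleftrightarrow> i = j"
  shows "induced_sub (K1nstar n) G"
proof -
  define f where "f z = (if z = 0 then x0 else if z \<le> n then c (z - 1) else p (z - n - 1))" for z
  have sy: "(x, y) \<in> edges G \<longleftrightarrow> (y, x) \<in> edges G" for x y using wf_sym[OF wf] .
  have ir: "(x, x) \<notin> edges G" for x using wf_irr[OF wf] .
  have cls: "z = 0 \<or> (\<exists>i<n. z = i + 1) \<or> (\<exists>i<n. z = i + n + 1)"
    if "z \<le> 2 * n" for z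
  proof -
    have "z = 0 \<or> (z - 1 < n \<and> z = (z - 1) + 1) \<or> (z - n - 1 < n \<and> z = (z - n - 1) + n + 1)"
      using that by auto
    then show ?thesis by blast
  qed
  have fC: "f (i + 1) = c i" if "i < n" for i using that by (simp add: f_def)
  have fP: "f (i + n + 1) = p i" if "i < n" for i using that by (simp add: f_def)
  have f0: "f 0 = x0" by (simp add: f_def)
  have xc': "x0 \<noteq> c i" if "i < n" for i using xc ir that by metis
  have cinj: "c i = c j \<Longrightarrow> i < n \<Longrightarrow> j < n \<Longrightarrow> i = j" for i j using cp ir by metis
  have pinj: "p i = p j \<Longrightarrow> i < n \<Longrightarrow> j < n \<Longrightarrow> i = j" for i j using cp by metis
  have cpd: "c i \<noteq> p j" if "i < n" "j < n" for i j
  proof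
    assume e: "c i = p j"
    show False
    proof (cases "i = j")
      case True then show False using e cp ir that by metis
    next
      case False then show False using e xc xp that by metis
    qed
  qed
  have EH: "(x, y) \<in> edges (K1nstar n) \<longleftrightarrow> x \<noteq> y \<and>
      ((x = 0 \<and> 1 \<le> y \<and> y \<le> n) \<or> (1 \<le> x \<and> x \<le> n \<and> y = x + n) \<or>
       (y = 0 \<and> 1 \<le> x \<and> x \<le> n) \<or> (1 \<le> y \<and> y \<le> n \<and> x = y + n))"
    if "x \<le> 2 * n" "y \<le> 2 * n" for x y using that by (auto simp: K1nstar_def)
  show ?thesis
  proof (rule emb_intro[where f = f])
    show "inj_on f (verts (K1nstar n))"
    proof (rule inj_onI)
      fix x y assume x: "x \<in> verts (K1nstar n)" and y: "y \<in> verts (K1nstar n)" and e: "f x = f y"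
      have x2: "x \<le> 2*n" and y2: "y \<le> 2*n" using x y by (auto simp: K1nstar_def)
      from cls[OF x2] cls[OF y2] show "x = y"
      proof (elim disjE exE conjE)
        fix i j assume "i < n" "x = i + 1" "j < n" "y = j + 1" then show ?thesis using e fC cinj by auto
      next
        fix i j assume "i < n" "x = i + 1" "j < n" "y = j + n + 1" then show ?thesis using e fC fP cpd by auto
      next
        fix i j assume "i < n" "x = i + n + 1" "j < n" "y = j + 1" then show ?thesis using e fC fP cpd by metis
      next
        fix i j assume "i < n" "x = i + n + 1" "j < n" "y = j + n + 1" then show ?thesis using e fP pinj by auto
      next
        fix i assume "i < n" "x = i + 1" "y = 0" then show ?thesis using e fC f0 xc' by metis
      next
        fix i assume "i < n" "x = i + n + 1" "y = 0" then show ?thesis using e fP f0 xp by metis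
      next
        fix i assume "i < n" "y = i + 1" "x = 0" then show ?thesis using e fC f0 xc' by metis
      next
        fix i assume "i < n" "y = i + n + 1" "x = 0" then show ?thesis using e fP f0 xp by metis
      qed simp
    qed
  next
    show "f ` verts (K1nstar n) \<subseteq> verts G"
    proof
      fix w assume "w \<in> f ` verts (K1nstar n)"
      then obtain z where z: "z \<le> 2 * n" "w = f z" by (auto simp: K1nstar_def)
      from cls[OF z(1)] show "w \<in> verts G"
      proof (elim disjE exE conjE)
        assume "z = 0" then show ?thesis using z f0 xV by simp
      next
        fix i assume "i < n" "z = i + 1" then show ?thesis using z fC cV by simp
      next
        fix i assume "i < n" "z = i + n + 1" then show ?thesis using z fP pV by simp
      qed
    qed
  next
    fix x y assume x: "x \<in> verts (K1nstar n)" and y: "y \<in> verts (K1nstar n)"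
    have x2: "x \<le> 2*n" and y2: "y \<le> 2*n" using x y by (auto simp: K1nstar_def)
    from cls[OF x2] cls[OF y2] show "(x, y) \<in> edges (K1nstar n) \<longleftrightarrow> (f x, f y) \<in> edges G"
    proof (elim disjE exE conjE)
      assume "x = 0" "y = 0" then show ?thesis using EH[OF x2 y2] ir by simp
    next
      fix i j assume "i < n" "x = i + 1" "j < n" "y = j + 1" then show ?thesis using EH[OF x2 y2] fC cc ir by auto
    next
      fix i j assume "i < n" "x = i + 1" "j < n" "y = j + n + 1" then show ?thesis using EH[OF x2 y2] fC fP cp by auto
    next
      fix i j assume "i < n" "x = i + n + 1" "j < n" "y = j + 1" then show ?thesis using EH[OF x2 y2] fC fP cp sy by auto
    next
      fix i j assume "i < n" "x = i + n + 1" "j < n" "y = j + n + 1" then show ?thesis using EH[OF x2 y2] fP pp ir by auto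
    next
      fix i assume "i < n" "x = i + 1" "y = 0" then show ?thesis using EH[OF x2 y2] fC f0 xc sy by auto
    next
      fix i assume "i < n" "x = i + n + 1" "y = 0" then show ?thesis using EH[OF x2 y2] fP f0 xp sy by auto
    next
      fix i assume "i < n" "y = i + 1" "x = 0" then show ?thesis using EH[OF x2 y2] fC f0 xc by auto
    next
      fix i assume "i < n" "y = i + n + 1" "x = 0" then show ?thesis using EH[OF x2 y2] fP f0 xp by auto
    qed
  qed
qed


lemma div3: "r < 3 \<Longrightarrow> (3 * i + r) div 3 = (i::nat)" by simp
lemma mod3: "r < 3 \<Longrightarrow> (3 * i + r) mod 3 = (r::nat)" by simp

lemma emb_nP3:
  assumes wf: "wf_graph G"
    and aV: "\<forall>i<n. a i \<in> verts G" and mV: "\<forall>i<n. m i \<in> verts G" and bV: "\<forall>i<n. b i \<in> verts G"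
    and ma: "\<forall>i<n. (m i, a i) \<in> edges G" and mb: "\<forall>i<n. (m i, b i) \<in> edges G"
    and ab: "\<forall>i<n. (a i, b i) \<notin> edges G \<and> a i \<noteq> b i"
    and cross: "\<forall>i<n. \<forall>j<n. i \<noteq> j \<longrightarrow> (\<forall>u\<in>{a i, m i, b i}. \<forall>w\<in>{a j, m j, b j}. (u, w) \<notin> edges G)"
  shows "induced_sub (nP3 n) G"
proof -
  define t where "t i r = (if r = (0::nat) then a i else if r = 1 then m i else b i)" for i r
  define f where "f z = t (z div 3) (z mod 3)" for z
  have sy: "(x, y) \<in> edges G \<longleftrightarrow> (y, x) \<in> edges G" for x y using wf_sym[OF wf] .
  have ir: "(x, x) \<notin> edges G" for x using wf_irr[OF wf] .
  have tin: "t i r \<in> {a i, m i, b i}" for i r by (auto simp: t_def)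
  have nb: "\<exists>u\<in>{a i, m i, b i}. (u, t i r) \<in> edges G" if "i < n" for i r
  proof -
    have "(m i, a i) \<in> edges G" "(m i, b i) \<in> edges G" using that ma mb by auto
    then have "(a i, m i) \<in> edges G" using sy by blast
    then show ?thesis using \<open>(m i, a i) \<in> edges G\<close> \<open>(m i, b i) \<in> edges G\<close>
      unfolding t_def by (cases "r = 0"; cases "r = 1") auto
  qed
  have crossE: "(u, w) \<notin> edges G" if "i < n" "j < n" "i \<noteq> j" "u \<in> {a i, m i, b i}" "w \<in> {a j, m j, b j}" for i j u w
  proof -
    have "\<forall>u\<in>{a i, m i, b i}. \<forall>w\<in>{a j, m j, b j}. (u, w) \<notin> edges G"
      using cross that(1-3) by simp
    then show ?thesis using that(4,5) by auto
  qed
  have tdis: "t i r \<noteq> t j r'" if ij: "i < n" "j < n" "i \<noteq> j" for i j r r'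
  proof
    assume e: "t i r = t j r'"
    have "\<exists>u\<in>{a i, m i, b i}. (u, t i r) \<in> edges G" using nb[OF ij(1)] .
    then obtain u where u: "u \<in> {a i, m i, b i}" "(u, t i r) \<in> edges G" by (elim bexE)
    then have "(u, t j r') \<in> edges G" using e by simp
    then show False using crossE[OF ij u(1) tin[of j r']] by simp
  qed
  have tinj: "t i r = t i r' \<Longrightarrow> r < 3 \<Longrightarrow> r' < 3 \<Longrightarrow> i < n \<Longrightarrow> r = r'" for i r r'
  proof -
    assume h: "t i r = t i r'" "r < 3" "r' < 3" "i < n"
    have e1: "a i \<noteq> m i" "m i \<noteq> b i" "a i \<noteq> b i" using ma mb ab ir h(4) by metis+
    have "r = 0 \<or> r = 1 \<or> r = 2" "r' = 0 \<or> r' = 1 \<or> r' = 2" using h by auto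
    then show "r = r'" using h(1) e1 unfolding t_def by auto
  qed
  have tV: "t i r \<in> verts G" if "i < n" for i r using that aV mV bV by (auto simp: t_def)
  have dec: "\<exists>i r. i < n \<and> r < 3 \<and> z = 3 * i + r" if "z < 3 * n" for z
    using that by (intro exI[of _ "z div 3"] exI[of _ "z mod 3"]) auto
  have fdec: "f (3 * i + r) = t i r" if "r < 3" for i r using that by (simp add: f_def)
  have EH: "(3 * i + r, 3 * j + r') \<in> edges (nP3 n) \<longleftrightarrow> i = j \<and> r \<noteq> r' \<and> (r = 1 \<or> r' = 1)"
    if "i < n" "j < n" "r < 3" "r' < 3" for i j r r'
    using that by (auto simp: nP3_def)
  show ?thesis
  proof (rule emb_intro[where f = f])
    show "inj_on f (verts (nP3 n))"
    proof (rule inj_onI)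
      fix x y assume x: "x \<in> verts (nP3 n)" and y: "y \<in> verts (nP3 n)" and e: "f x = f y"
      have "x < 3 * n" using x by (simp add: nP3_def)
      then obtain i r where ir1: "i < n" "r < 3" "x = 3 * i + r" using dec by blast
      have "y < 3 * n" using y by (simp add: nP3_def)
      then obtain j r' where ir2: "j < n" "r' < 3" "y = 3 * j + r'" using dec by blast
      have "t i r = t j r'" using e ir1 ir2 fdec by simp
      then have "i = j" using tdis ir1 ir2 by blast
      then have "r = r'" using tinj \<open>t i r = t j r'\<close> ir1 ir2 by blast
      then show "x = y" using ir1 ir2 \<open>i = j\<close> by simp
    qed
  next
    show "f ` verts (nP3 n) \<subseteq> verts G"
    proof
      fix w assume "w \<in> f ` verts (nP3 n)"
      then obtain z where z: "z < 3 * n" "w = f z" by (auto simp: nP3_def)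
      obtain i r where "i < n" "r < 3" "z = 3 * i + r" using dec z by blast
      then show "w \<in> verts G" using z fdec tV by simp
    qed
  next
    fix x y assume x: "x \<in> verts (nP3 n)" and y: "y \<in> verts (nP3 n)"
    have "x < 3 * n" using x by (simp add: nP3_def)
      then obtain i r where ir1: "i < n" "r < 3" "x = 3 * i + r" using dec by blast
    have "y < 3 * n" using y by (simp add: nP3_def)
      then obtain j r' where ir2: "j < n" "r' < 3" "y = 3 * j + r'" using dec by blast
    show "(x, y) \<in> edges (nP3 n) \<longleftrightarrow> (f x, f y) \<in> edges G"
    proof (cases "i = j")
      case False
      then have "(t i r, t j r') \<notin> edges G" using crossE[OF ir1(1) ir2(1) False tin tin] by simp
      then show ?thesis using EH[OF ir1(1) ir2(1) ir1(2) ir2(2)] ir1 ir2 fdec False by simp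
    next
      case True
      have m1: "(m i, a i) \<in> edges G" "(m i, b i) \<in> edges G" "(a i, b i) \<notin> edges G" using ma mb ab ir1 by auto
      then have m2: "(a i, m i) \<in> edges G" "(b i, m i) \<in> edges G" "(b i, a i) \<notin> edges G" using sy by blast+
      have "r = 0 \<or> r = 1 \<or> r = 2" "r' = 0 \<or> r' = 1 \<or> r' = 2" using ir1 ir2 by auto
      then have "(t i r, t i r') \<in> edges G \<longleftrightarrow> r \<noteq> r' \<and> (r = 1 \<or> r' = 1)"
        using m1 m2 ir unfolding t_def by auto
      then show ?thesis using EH[OF ir1(1) ir2(1) ir1(2) ir2(2)] ir1 ir2 fdec True by simp
    qed
  qed
qed


definition badset :: "nat graph \<Rightarrow> nat set" where
  "badset G = {v \<in> verts G. 2 \<le> card (components (induced G (nbhd G v)))}"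

definition nrel :: "nat graph \<Rightarrow> nat \<Rightarrow> (nat \<times> nat) set" where
  "nrel G v = edges G \<inter> (nbhd G v \<times> nbhd G v)"

lemma nbhd_iff: "x \<in> nbhd G v \<longleftrightarrow> x \<in> verts G \<and> (v, x) \<in> edges G"
  by (simp add: nbhd_def)

lemma components_nbhd:
  "components (induced G (nbhd G v)) = (\<lambda>a. {y \<in> nbhd G v. (a, y) \<in> (nrel G v)\<^sup>*}) ` nbhd G v"
proof -
  have "edges (induced G (nbhd G v)) \<inter> (verts (induced G (nbhd G v)) \<times> verts (induced G (nbhd G v))) = nrel G v"
    by (auto simp: induced_def edges_def verts_def nrel_def)
  moreover have "verts (induced G (nbhd G v)) = nbhd G v" by (simp add: induced_def verts_def)
  ultimately show ?thesis unfolding components_def by simp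
qed

lemma nrel_sym: "wf_graph G \<Longrightarrow> sym (nrel G v)"
  by (auto simp: sym_def nrel_def wf_graph_def)

lemma bad_other:
  assumes wf: "wf_graph G" and bad: "v \<in> badset G" and x: "x \<in> nbhd G v"
  shows "\<exists>w\<in>nbhd G v. (x, w) \<notin> (nrel G v)\<^sup>*"
proof (rule ccontr)
  assume "\<not> ?thesis"
  then have all: "\<forall>w\<in>nbhd G v. (x, w) \<in> (nrel G v)\<^sup>*" by blast
  have sy: "sym ((nrel G v)\<^sup>*)" using nrel_sym[OF wf] sym_rtrancl by blast
  define C where "C a = {y \<in> nbhd G v. (a, y) \<in> (nrel G v)\<^sup>*}" for a
  have "C a = C x" if "a \<in> nbhd G v" for a
  proof -
    have xa: "(x, a) \<in> (nrel G v)\<^sup>*" using all that by blast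
    then have ax: "(a, x) \<in> (nrel G v)\<^sup>*" using sy by (meson symD)
    have "(a, y) \<in> (nrel G v)\<^sup>* \<longleftrightarrow> (x, y) \<in> (nrel G v)\<^sup>*" for y
      using xa ax rtrancl_trans[of x a _ y] rtrancl_trans[of a x _ y] by blast
    then show ?thesis unfolding C_def by simp
  qed
  then have "components (induced G (nbhd G v)) \<subseteq> {C x}"
    unfolding components_nbhd C_def[symmetric] by auto
  then have "card (components (induced G (nbhd G v))) \<le> 1"
    using card_mono[of "{C x}"] by fastforce
  then show False using bad by (simp add: badset_def)
qed

lemma bad_nonempty:
  assumes "v \<in> badset G" shows "\<exists>x. x \<in> nbhd G v"
proof (rule ccontr)
  assume "\<not> ?thesis"
  then have "nbhd G v = {}" by blast
  then show False using assms by (simp add: badset_def components_nbhd)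
qed

lemma sep_facts:
  assumes wf: "wf_graph G" and xw: "(x, w) \<notin> (nrel G v)\<^sup>*" and x: "x \<in> nbhd G v"
    and w: "w \<in> nbhd G v" and u: "u \<in> nbhd G v" and xu: "x = u \<or> (x, u) \<in> edges G"
  shows "(u, w) \<notin> edges G \<and> u \<noteq> w"
proof -
  have r1: "(x, u) \<in> (nrel G v)\<^sup>*" using xu x u by (auto simp: nrel_def)
  show ?thesis
  proof (intro conjI notI)
    assume "(u, w) \<in> edges G"
    then have "(u, w) \<in> nrel G v" using u w by (simp add: nrel_def)
    then show False using r1 xw by (meson rtrancl.rtrancl_into_rtrancl)
  next
    assume "u = w" then show False using r1 xw by simp
  qed
qed

lemma hom_split:
  assumes hom: "\<forall>i j i' j'. i < j \<longrightarrow> j < k \<longrightarrow> i' < j' \<longrightarrow> j' < k \<longrightarrow> col (s i) (s j) = col (s i') (s j')"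
  shows "(\<forall>i j. i < j \<longrightarrow> j < k \<longrightarrow> Q (col (s i) (s j))) \<or> (\<forall>i j. i < j \<longrightarrow> j < k \<longrightarrow> \<not> Q (col (s i) (s j)))"
proof (cases "\<exists>i j. i < j \<and> j < k \<and> Q (col (s i) (s j))")
  case True
  then obtain i0 j0 where ij: "i0 < j0" "j0 < k" "Q (col (s i0) (s j0))" by blast
  have "Q (col (s i) (s j))" if "i < j" "j < k" for i j
    using hom[rule_format, OF that ij(1,2)] ij(3) by simp
  then show ?thesis by blast
next
  case False then show ?thesis by blast
qed


lemma neq_cases_sym:
  fixes i j n :: nat
  assumes "\<forall>i j. i < j \<longrightarrow> j < n \<longrightarrow> P i j" "\<And>i j. P i j \<Longrightarrow> P j i"
    "i < n" "j < n" "i \<noteq> j"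
  shows "P i j"
proof (cases "i < j")
  case True then show ?thesis using assms by blast
next
  case False then have "j < i" using assms(5) by simp
  then show ?thesis using assms by blast
qed

lemma sym_in:
  fixes i j n :: nat
  assumes wf: "wf_graph G" and h: "\<forall>i j. i < j \<longrightarrow> j < n \<longrightarrow> (f i, g j) \<in> edges G"
    and "i < n" "j < n" "i \<noteq> j" and fg: "f = g"
  shows "(f i, g j) \<in> edges G"
proof (cases "i < j")
  case True then show ?thesis using h assms(4) by blast
next
  case False then have "j < i" using assms(5) by simp
  then have "(f j, g i) \<in> edges G" using h assms(3) by blast
  then show ?thesis using wf_sym[OF wf] fg by blast
qed

lemma sym_notin:
  fixes i j n :: nat
  assumes wf: "wf_graph G" and h: "\<forall>i j. i < j \<longrightarrow> j < n \<longrightarrow> (f i, g j) \<notin> edges G"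
    and "i < n" "j < n" "i \<noteq> j" and fg: "f = g"
  shows "(f i, g j) \<notin> edges G"
proof (cases "i < j")
  case True then show ?thesis using h assms(4) by blast
next
  case False then have "j < i" using assms(5) by simp
  then have "(f j, g i) \<notin> edges G" using h assms(3) by blast
  then show ?thesis using wf_sym[OF wf] fg by blast
qed

lemma clique_lemma:
  fixes n :: nat
  shows "\<exists>R. \<forall>(G::nat graph) K. wf_graph G \<longrightarrow> K \<subseteq> badset G \<longrightarrow>
     (\<forall>u\<in>K. \<forall>v\<in>K. u \<noteq> v \<longrightarrow> (u, v) \<in> edges G) \<longrightarrow> finite K \<longrightarrow> R \<le> card K \<longrightarrow> found G n"
proof -
  obtain N where N: "\<forall>(S::nat set) (col::nat \<Rightarrow> nat \<Rightarrow> bool). finite S \<longrightarrow> N \<le> card S \<longrightarrow>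
     (\<exists>s. (\<forall>i<n. s i \<in> S) \<and> (\<forall>i j. i < j \<longrightarrow> j < n \<longrightarrow> s i \<noteq> s j) \<and>
          (\<forall>i j i' j'. i < j \<longrightarrow> j < n \<longrightarrow> i' < j' \<longrightarrow> j' < n \<longrightarrow> col (s i) (s j) = col (s i') (s j')))"
    using ramsey_seq[where 'b = bool and k = n] by (elim exE) (rule that)
  show ?thesis
  proof (rule exI[of _ "max N 2"], intro allI impI)
    fix G :: "nat graph" and K
    assume wf: "wf_graph G" and KB: "K \<subseteq> badset G" and Kc: "\<forall>u\<in>K. \<forall>v\<in>K. u \<noteq> v \<longrightarrow> (u, v) \<in> edges G"
      and fK: "finite K" and cK: "max N 2 \<le> card K"
    have sy: "(x, y) \<in> edges G \<longleftrightarrow> (y, x) \<in> edges G" for x y using wf_sym[OF wf] .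
    have ir: "(x, x) \<notin> edges G" for x using wf_irr[OF wf] .
    have exo: "\<exists>u. u \<in> K \<and> u \<noteq> v" if "v \<in> K" for v
    proof (rule ccontr)
      assume "\<not> ?thesis"
      then have "K \<subseteq> {v}" by blast
      then have "card K \<le> 1" using card_mono[of "{v}" K] by simp
      then show False using cK by simp
    qed
    define ov where "ov v = (SOME u. u \<in> K \<and> u \<noteq> v)" for v
    have ov: "ov v \<in> K \<and> ov v \<noteq> v" if "v \<in> K" for v
      unfolding ov_def using someI_ex[OF exo[OF that]] .
    have onb: "ov v \<in> nbhd G v" if "v \<in> K" for v
    proof -
      have e: "(v, ov v) \<in> edges G" using ov[OF that] that Kc by metis
      then have "ov v \<in> verts G" using wf_V[OF wf] by blast
      then show ?thesis using e by (simp add: nbhd_iff)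
    qed
    define w where "w v = (SOME x. x \<in> nbhd G v \<and> (ov v, x) \<notin> (nrel G v)\<^sup>*)" for v
    have w: "w v \<in> nbhd G v \<and> (ov v, w v) \<notin> (nrel G v)\<^sup>*" if "v \<in> K" for v
    proof -
      have "\<exists>x. x \<in> nbhd G v \<and> (ov v, x) \<notin> (nrel G v)\<^sup>*"
        using bad_other[OF wf _ onb[OF that]] KB that by blast
      then show ?thesis unfolding w_def by (rule someI_ex)
    qed
    have wadj: "(v, w v) \<in> edges G \<and> w v \<in> verts G" if "v \<in> K" for v
      using w[OF that] by (simp add: nbhd_iff)
    have wnot: "(u, w v) \<notin> edges G \<and> u \<noteq> w v" if "v \<in> K" "u \<in> K" "u \<noteq> v" for u v
    proof -
      have e: "(v, u) \<in> edges G" using that Kc by metis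
      then have "u \<in> verts G" using wf_V[OF wf] by blast
      then have un: "u \<in> nbhd G v" using e by (simp add: nbhd_iff)
      have "ov v = u \<or> (ov v, u) \<in> edges G" using Kc ov[OF that(1)] that(2) by blast
      then show ?thesis using sep_facts[OF wf _ onb[OF that(1)] _ un] w[OF that(1)] by blast
    qed
    have "N \<le> card K" using cK by simp
    then obtain s where sK: "\<forall>i<n. s i \<in> K" and sinj: "\<forall>i j. i < j \<longrightarrow> j < n \<longrightarrow> s i \<noteq> s j"
      and hom: "\<forall>i j i' j'. i < j \<longrightarrow> j < n \<longrightarrow> i' < j' \<longrightarrow> j' < n \<longrightarrow>
                  ((w (s i), w (s j)) \<in> edges G) = ((w (s i'), w (s j')) \<in> edges G)"
      using N[rule_format, of K "\<lambda>x y. (w x, w y) \<in> edges G", OF fK] by blast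
    have sne: "s i \<noteq> s j" if "i < n" "j < n" "i \<noteq> j" for i j
      using neq_cases_sym[of n "\<lambda>i j. s i \<noteq> s j", OF sinj _ that] by metis
    have sV: "\<forall>i<n. s i \<in> verts G" using sK KB by (auto simp: badset_def)
    have wV: "\<forall>i<n. w (s i) \<in> verts G" using sK wadj by blast
    have cc: "\<forall>i<n. \<forall>j<n. i \<noteq> j \<longrightarrow> (s i, s j) \<in> edges G" using sK sne Kc by blast
    have cp: "\<forall>i<n. \<forall>j<n. (s i, w (s j)) \<in> edges G \<longleftrightarrow> i = j"
    proof (intro allI impI)
      fix i j assume "i < n" "j < n"
      then show "(s i, w (s j)) \<in> edges G \<longleftrightarrow> i = j"
        using wadj[of "s i"] wnot[of "s j" "s i"] sK sne by (cases "i = j") auto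
    qed
    have dis: "\<forall>i<n. \<forall>j<n. s i \<noteq> w (s j)"
    proof (intro allI impI)
      fix i j assume ij: "i < n" "j < n"
      show "s i \<noteq> w (s j)"
      proof (cases "i = j")
        case True then show ?thesis using wadj[of "s i"] sK ij ir by metis
      next
        case False then show ?thesis using wnot[of "s j" "s i"] sK sne ij by blast
      qed
    qed
    from hom_split[where col = "\<lambda>x y. (w x, w y) \<in> edges G" and s = s and k = n and Q = "\<lambda>b. b", OF hom]
    show "found G n"
    proof
      assume h: "\<forall>i j. i < j \<longrightarrow> j < n \<longrightarrow> (w (s i), w (s j)) \<in> edges G"
      have pp: "\<forall>i<n. \<forall>j<n. i \<noteq> j \<longrightarrow> (w (s i), w (s j)) \<in> edges G"
        using sym_in[OF wf, of n "\<lambda>i. w (s i)" "\<lambda>i. w (s i)", OF h] by blast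
      have "induced_sub (CK n) G" using emb_CK[OF wf _ _ cc pp cp dis] sV wV by blast
      then show ?thesis by (simp add: found_def)
    next
      assume h: "\<forall>i j. i < j \<longrightarrow> j < n \<longrightarrow> (w (s i), w (s j)) \<notin> edges G"
      have pp: "\<forall>i<n. \<forall>j<n. i \<noteq> j \<longrightarrow> (w (s i), w (s j)) \<notin> edges G"
        using sym_notin[OF wf, of n "\<lambda>i. w (s i)" "\<lambda>i. w (s i)", OF h] by blast
      have "induced_sub (Kstar n) G" using emb_Kstar[OF wf _ _ cc pp cp] sV wV by blast
      then show ?thesis by (simp add: found_def)
    qed
  qed
qed


lemma star_lemma:
  fixes n :: nat
  shows "\<exists>R. \<forall>(G::nat graph) x J. wf_graph G \<longrightarrow> J \<subseteq> badset G \<longrightarrow>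
     (\<forall>u\<in>J. \<forall>v\<in>J. (u, v) \<notin> edges G) \<longrightarrow> (\<forall>v\<in>J. (x, v) \<in> edges G) \<longrightarrow>
     finite J \<longrightarrow> R \<le> card J \<longrightarrow> found G n"
proof -
  obtain N where N: "\<forall>(S::nat set) (col::nat \<Rightarrow> nat \<Rightarrow> bool \<times> bool \<times> bool). finite S \<longrightarrow> N \<le> card S \<longrightarrow>
     (\<exists>s. (\<forall>i<Suc n. s i \<in> S) \<and> (\<forall>i j. i < j \<longrightarrow> j < Suc n \<longrightarrow> s i \<noteq> s j) \<and>
          (\<forall>i j i' j'. i < j \<longrightarrow> j < Suc n \<longrightarrow> i' < j' \<longrightarrow> j' < Suc n \<longrightarrow> col (s i) (s j) = col (s i') (s j')))"
    using ramsey_seq[where 'b = "bool \<times> bool \<times> bool" and k = "Suc n"] by (elim exE) (rule that)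
  show ?thesis
  proof (rule exI[of _ N], intro allI impI)
    fix G :: "nat graph" and x J
    assume wf: "wf_graph G" and JB: "J \<subseteq> badset G" and Ji: "\<forall>u\<in>J. \<forall>v\<in>J. (u, v) \<notin> edges G"
      and xJ: "\<forall>v\<in>J. (x, v) \<in> edges G" and fJ: "finite J" and cJ: "N \<le> card J"
    have sy: "(a, b) \<in> edges G \<longleftrightarrow> (b, a) \<in> edges G" for a b using wf_sym[OF wf] .
    have ir: "(a, a) \<notin> edges G" for a using wf_irr[OF wf] .
    have xnb: "x \<in> nbhd G v" if "v \<in> J" for v
    proof -
      have e: "(x, v) \<in> edges G" using xJ that by blast
      then have "x \<in> verts G" using wf_V[OF wf] by blast
      moreover have "(v, x) \<in> edges G" using e sy by blast
      ultimately show ?thesis by (simp add: nbhd_iff)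
    qed
    define w where "w v = (SOME y. y \<in> nbhd G v \<and> (x, y) \<notin> (nrel G v)\<^sup>*)" for v
    have w: "w v \<in> nbhd G v \<and> (x, w v) \<notin> (nrel G v)\<^sup>*" if "v \<in> J" for v
    proof -
      have "\<exists>y. y \<in> nbhd G v \<and> (x, y) \<notin> (nrel G v)\<^sup>*"
        using bad_other[OF wf _ xnb[OF that]] JB that by blast
      then show ?thesis unfolding w_def by (rule someI_ex)
    qed
    have wadj: "(v, w v) \<in> edges G \<and> w v \<in> verts G" if "v \<in> J" for v
      using w[OF that] by (simp add: nbhd_iff)
    have wx: "(x, w v) \<notin> edges G \<and> x \<noteq> w v" if "v \<in> J" for v
    proof -
      have "w v \<in> nbhd G v" "(x, w v) \<notin> (nrel G v)\<^sup>*" using w[OF that] by auto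
      then show ?thesis using sep_facts[OF wf _ xnb[OF that] _ xnb[OF that]] by blast
    qed
    define col where "col u v = ((w u, v) \<in> edges G, (w v, u) \<in> edges G, (w u, w v) \<in> edges G)" for u v
    obtain s where sJ: "\<forall>i<Suc n. s i \<in> J" and sinj: "\<forall>i j. i < j \<longrightarrow> j < Suc n \<longrightarrow> s i \<noteq> s j"
      and hom: "\<forall>i j i' j'. i < j \<longrightarrow> j < Suc n \<longrightarrow> i' < j' \<longrightarrow> j' < Suc n \<longrightarrow> col (s i) (s j) = col (s i') (s j')"
      using N[rule_format, of J col, OF fJ cJ] by (elim exE conjE) (rule that)
    have sne: "s i \<noteq> s j" if "i < Suc n" "j < Suc n" "i \<noteq> j" for i j
      using neq_cases_sym[of "Suc n" "\<lambda>i j. s i \<noteq> s j", OF sinj _ that] by metis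
    have sV: "s i \<in> verts G" if "i < Suc n" for i using sJ JB that by (auto simp: badset_def)
    have wV: "w (s i) \<in> verts G" if "i < Suc n" for i using sJ wadj that by blast
    have xV: "x \<in> verts G" using xJ sJ wf_V[OF wf] by blast
    have ind: "(s i, s j) \<notin> edges G" if "i < Suc n" "j < Suc n" for i j using sJ Ji that by blast
    have sw: "(s i, w (s i)) \<in> edges G" "(w (s i), s i) \<in> edges G" if "i < Suc n" for i
      using wadj sJ that sy by blast+
    have wx': "(x, w (s i)) \<notin> edges G \<and> x \<noteq> w (s i)" if "i < Suc n" for i using wx sJ that by blast
    have xs: "(x, s i) \<in> edges G" if "i < Suc n" for i using xJ sJ that by blast
    have h1: "(\<forall>i j. i < j \<longrightarrow> j < Suc n \<longrightarrow> (w (s i), s j) \<in> edges G) \<or>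
              (\<forall>i j. i < j \<longrightarrow> j < Suc n \<longrightarrow> (w (s i), s j) \<notin> edges G)"
      using hom_split[where col = col and s = s and k = "Suc n" and Q = fst, OF hom] by (simp add: col_def)
    have h2: "(\<forall>i j. i < j \<longrightarrow> j < Suc n \<longrightarrow> (w (s j), s i) \<in> edges G) \<or>
              (\<forall>i j. i < j \<longrightarrow> j < Suc n \<longrightarrow> (w (s j), s i) \<notin> edges G)"
      using hom_split[where col = col and s = s and k = "Suc n" and Q = "\<lambda>c. fst (snd c)", OF hom] by (simp add: col_def)
    have h3: "(\<forall>i j. i < j \<longrightarrow> j < Suc n \<longrightarrow> (w (s i), w (s j)) \<in> edges G) \<or>
              (\<forall>i j. i < j \<longrightarrow> j < Suc n \<longrightarrow> (w (s i), w (s j)) \<notin> edges G)"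
      using hom_split[where col = col and s = s and k = "Suc n" and Q = "\<lambda>c. snd (snd c)", OF hom] by (simp add: col_def)
    show "found G n"
    proof (cases "\<forall>i j. i < j \<longrightarrow> j < Suc n \<longrightarrow> (w (s i), s j) \<in> edges G")
      case True
      have "induced_sub (K2n n) G"
      proof (rule emb_K2n[OF wf xV, of "w (s 0)" n "\<lambda>i. s (Suc i)"])
        show "w (s 0) \<in> verts G" using wV by simp
        show "\<forall>i<n. s (Suc i) \<in> verts G" using sV by simp
        show "x \<noteq> w (s 0)" "(x, w (s 0)) \<notin> edges G" using wx' by auto
        show "\<forall>i<n. (x, s (Suc i)) \<in> edges G" using xs by simp
        show "\<forall>i<n. (w (s 0), s (Suc i)) \<in> edges G" using True by simp
        show "\<forall>i<n. \<forall>j<n. i \<noteq> j \<longrightarrow> (s (Suc i), s (Suc j)) \<notin> edges G \<and> s (Suc i) \<noteq> s (Suc j)"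
          using ind sne by simp
      qed
      then show ?thesis by (simp add: found_def)
    next
      case F1: False
      then have n1: "\<forall>i j. i < j \<longrightarrow> j < Suc n \<longrightarrow> (w (s i), s j) \<notin> edges G" using h1 by blast
      show ?thesis
      proof (cases "\<forall>i j. i < j \<longrightarrow> j < Suc n \<longrightarrow> (w (s j), s i) \<in> edges G")
        case True
        have "induced_sub (K2n n) G"
        proof (rule emb_K2n[OF wf xV, of "w (s n)" n s])
          show "w (s n) \<in> verts G" using wV by simp
          show "\<forall>i<n. s i \<in> verts G" using sV by simp
          show "x \<noteq> w (s n)" "(x, w (s n)) \<notin> edges G" using wx' by auto
          show "\<forall>i<n. (x, s i) \<in> edges G" using xs by simp
          show "\<forall>i<n. (w (s n), s i) \<in> edges G" using True by simp
          show "\<forall>i<n. \<forall>j<n. i \<noteq> j \<longrightarrow> (s i, s j) \<notin> edges G \<and> s i \<noteq> s j"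
            using ind sne by simp
        qed
        then show ?thesis by (simp add: found_def)
      next
        case F2: False
        then have n2: "\<forall>i j. i < j \<longrightarrow> j < Suc n \<longrightarrow> (w (s j), s i) \<notin> edges G" using h2 by blast
        have nw: "(w (s i), s j) \<notin> edges G" if "i < Suc n" "j < Suc n" "i \<noteq> j" for i j
        proof (cases "i < j")
          case True then show ?thesis using n1 that by blast
        next
          case False then have "j < i" using that by simp
          then show ?thesis using n2 that by blast
        qed
        show ?thesis
        proof (cases "\<forall>i j. i < j \<longrightarrow> j < Suc n \<longrightarrow> (w (s i), w (s j)) \<in> edges G")
          case True
          then have T': "\<forall>i j. i < j \<longrightarrow> j < n \<longrightarrow> (w (s i), w (s j)) \<in> edges G" by simp
          have "induced_sub (Kstar n) G"
          proof (rule emb_Kstar[OF wf])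
            show "\<forall>i<n. w (s i) \<in> verts G" "\<forall>i<n. s i \<in> verts G" using wV sV by simp_all
            show "\<forall>i<n. \<forall>j<n. i \<noteq> j \<longrightarrow> (w (s i), w (s j)) \<in> edges G"
              using sym_in[OF wf, of n "\<lambda>i. w (s i)" "\<lambda>i. w (s i)", OF T'] by blast
            show "\<forall>i<n. \<forall>j<n. i \<noteq> j \<longrightarrow> (s i, s j) \<notin> edges G" using ind by simp
            show "\<forall>i<n. \<forall>j<n. (w (s i), s j) \<in> edges G \<longleftrightarrow> i = j"
              using sw nw by (metis less_SucI)
          qed
          then show ?thesis by (simp add: found_def)
        next
          case False
          then have "\<forall>i j. i < j \<longrightarrow> j < Suc n \<longrightarrow> (w (s i), w (s j)) \<notin> edges G" using h3 by blast
          then have F': "\<forall>i j. i < j \<longrightarrow> j < n \<longrightarrow> (w (s i), w (s j)) \<notin> edges G" by simp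
          have "induced_sub (K1nstar n) G"
          proof (rule emb_K1nstar[OF wf xV])
            show "\<forall>i<n. s i \<in> verts G" "\<forall>i<n. w (s i) \<in> verts G" using wV sV by simp_all
            show "\<forall>i<n. (x, s i) \<in> edges G" using xs by simp
            show "\<forall>i<n. (x, w (s i)) \<notin> edges G \<and> x \<noteq> w (s i)" using wx' by simp
            show "\<forall>i<n. \<forall>j<n. i \<noteq> j \<longrightarrow> (s i, s j) \<notin> edges G" using ind by simp
            show "\<forall>i<n. \<forall>j<n. i \<noteq> j \<longrightarrow> (w (s i), w (s j)) \<notin> edges G"
              using sym_notin[OF wf, of n "\<lambda>i. w (s i)" "\<lambda>i. w (s i)", OF F'] by blast
            show "\<forall>i<n. \<forall>j<n. (s i, w (s j)) \<in> edges G \<longleftrightarrow> i = j"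
              using sw nw sy by (metis less_SucI)
          qed
          then show ?thesis by (simp add: found_def)
        qed
      qed
    qed
  qed
qed


type_synonym col8 = "bool \<times> bool \<times> bool \<times> bool \<times> bool \<times> bool \<times> bool \<times> bool"

lemma p3_lemma:
  fixes n :: nat
  shows "\<exists>R. \<forall>(G::nat graph) I. wf_graph G \<longrightarrow> I \<subseteq> badset G \<longrightarrow>
     (\<forall>u\<in>I. \<forall>v\<in>I. (u, v) \<notin> edges G) \<longrightarrow> finite I \<longrightarrow> R \<le> card I \<longrightarrow> found G n"
proof -
  obtain RX where RX: "\<forall>(G::nat graph) x J. wf_graph G \<longrightarrow> J \<subseteq> badset G \<longrightarrow>
     (\<forall>u\<in>J. \<forall>v\<in>J. (u, v) \<notin> edges G) \<longrightarrow> (\<forall>v\<in>J. (x, v) \<in> edges G) \<longrightarrow>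
     finite J \<longrightarrow> RX \<le> card J \<longrightarrow> found G n"
    using star_lemma[of n] by (elim exE) (rule that)
  define k where "k = max (RX + 1) (n + 2)"
  obtain N where N: "\<forall>(S::nat set) (col::nat \<Rightarrow> nat \<Rightarrow> col8). finite S \<longrightarrow> N \<le> card S \<longrightarrow>
     (\<exists>s. (\<forall>i<k. s i \<in> S) \<and> (\<forall>i j. i < j \<longrightarrow> j < k \<longrightarrow> s i \<noteq> s j) \<and>
          (\<forall>i j i' j'. i < j \<longrightarrow> j < k \<longrightarrow> i' < j' \<longrightarrow> j' < k \<longrightarrow> col (s i) (s j) = col (s i') (s j')))"
    using ramsey_seq[where 'b = col8 and k = k] by (elim exE) (rule that)
  show ?thesis
  proof (rule exI[of _ N], intro allI impI)
    fix G :: "nat graph" and I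
    assume wf: "wf_graph G" and IB: "I \<subseteq> badset G" and Ii: "\<forall>u\<in>I. \<forall>v\<in>I. (u, v) \<notin> edges G"
      and fI: "finite I" and cI: "N \<le> card I"
    have sy: "(x, y) \<in> edges G \<longleftrightarrow> (y, x) \<in> edges G" for x y using wf_sym[OF wf] .
    have ir: "(x, x) \<notin> edges G" for x using wf_irr[OF wf] .
    define a where "a v = (SOME y. y \<in> nbhd G v)" for v
    have a: "a v \<in> nbhd G v" if "v \<in> I" for v
    proof -
      have "\<exists>y. y \<in> nbhd G v" using bad_nonempty[of v G] IB that by blast
      then show ?thesis unfolding a_def by (rule someI_ex)
    qed
    define b where "b v = (SOME y. y \<in> nbhd G v \<and> (a v, y) \<notin> (nrel G v)\<^sup>*)" for v
    have b: "b v \<in> nbhd G v \<and> (a v, b v) \<notin> (nrel G v)\<^sup>*" if "v \<in> I" for v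
    proof -
      have "\<exists>y. y \<in> nbhd G v \<and> (a v, y) \<notin> (nrel G v)\<^sup>*"
        using bad_other[OF wf _ a[OF that]] IB that by blast
      then show ?thesis unfolding b_def by (rule someI_ex)
    qed
    have ab: "(a v, b v) \<notin> edges G \<and> a v \<noteq> b v" if "v \<in> I" for v
      using sep_facts[OF wf _ a[OF that] _ a[OF that]] b[OF that] by blast
    have va: "(v, a v) \<in> edges G \<and> a v \<in> verts G" if "v \<in> I" for v using a[OF that] by (simp add: nbhd_iff)
    have vb: "(v, b v) \<in> edges G \<and> b v \<in> verts G" if "v \<in> I" for v using b[OF that] by (simp add: nbhd_iff)
    define col :: "nat \<Rightarrow> nat \<Rightarrow> col8" where "col u v = ((a u, v) \<in> edges G, (b u, v) \<in> edges G,
        (a v, u) \<in> edges G, (b v, u) \<in> edges G, (a u, a v) \<in> edges G, (b u, b v) \<in> edges G,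
        (a u, b v) \<in> edges G, (b u, a v) \<in> edges G)" for u v
    obtain s where sI: "\<forall>i<k. s i \<in> I" and sinj: "\<forall>i j. i < j \<longrightarrow> j < k \<longrightarrow> s i \<noteq> s j"
      and hom: "\<forall>i j i' j'. i < j \<longrightarrow> j < k \<longrightarrow> i' < j' \<longrightarrow> j' < k \<longrightarrow> col (s i) (s j) = col (s i') (s j')"
      using N[rule_format, of I col, OF fI cI] by (elim exE conjE) (rule that)
    have sne: "s i \<noteq> s j" if "i < k" "j < k" "i \<noteq> j" for i j
      using neq_cases_sym[of k "\<lambda>i j. s i \<noteq> s j", OF sinj _ that] by metis
    have sV: "s i \<in> verts G" if "i < k" for i using sI IB that by (auto simp: badset_def)
    have ind: "(s i, s j) \<notin> edges G" if "i < k" "j < k" for i j using sI Ii that by blast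
    have sa1: "(s i, a (s i)) \<in> edges G \<and> a (s i) \<in> verts G" if "i < k" for i
      using va sI that by blast
    have sb1: "(s i, b (s i)) \<in> edges G \<and> b (s i) \<in> verts G" if "i < k" for i
      using vb sI that by blast
    have sa: "(s i, a (s i)) \<in> edges G" "(a (s i), s i) \<in> edges G" "a (s i) \<in> verts G" if "i < k" for i
      using sa1[OF that] sy[THEN iffD1] by auto
    have sb: "(s i, b (s i)) \<in> edges G" "(b (s i), s i) \<in> edges G" "b (s i) \<in> verts G" if "i < k" for i
      using sb1[OF that] sy[THEN iffD1] by auto
    have sab: "(a (s i), b (s i)) \<notin> edges G \<and> a (s i) \<noteq> b (s i)" if "i < k" for i
      using ab sI that by blast
    have k2: "n + 2 \<le> k" "RX + 1 \<le> k" by (auto simp: k_def)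
    have star: "found G n" if A: "A \<subseteq> {..<k}" "RX \<le> card A" "\<forall>j\<in>A. (x, s j) \<in> edges G" for x A
    proof -
      have inj: "inj_on s A"
      proof (rule inj_onI)
        fix i j assume "i \<in> A" "j \<in> A" "s i = s j"
        then show "i = j" using sne A(1) by blast
      qed
      have "s ` A \<subseteq> badset G" using A(1) sI IB by blast
      moreover have "\<forall>u\<in>s ` A. \<forall>v\<in>s ` A. (u, v) \<notin> edges G" using A(1) ind by blast
      moreover have "\<forall>v\<in>s ` A. (x, v) \<in> edges G" using A(3) by blast
      moreover have "finite (s ` A)" using A(1) finite_subset by blast
      moreover have "RX \<le> card (s ` A)" using card_image[OF inj] A(2) by simp
      ultimately show ?thesis using RX[rule_format, OF wf, of "s ` A" x] by blast
    qed
    show "found G n"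
    proof (rule ccontr)
      assume nf: "\<not> found G n"
      have split: "(\<forall>i j. i < j \<longrightarrow> j < k \<longrightarrow> Q (col (s i) (s j))) \<or> (\<forall>i j. i < j \<longrightarrow> j < k \<longrightarrow> \<not> Q (col (s i) (s j)))" for Q
        by (rule hom_split[where col = col and s = s and k = k, OF hom])
      have nP1: "\<forall>i j. i < j \<longrightarrow> j < k \<longrightarrow> (a (s i), s j) \<notin> edges G"
      proof -
        have "\<not> (\<forall>i j. i < j \<longrightarrow> j < k \<longrightarrow> (a (s i), s j) \<in> edges G)"
        proof
          assume h: "\<forall>i j. i < j \<longrightarrow> j < k \<longrightarrow> (a (s i), s j) \<in> edges G"
          have "found G n" by (rule star[of "{1..<k}" "a (s 0)"]) (use h k2 in auto)
          with nf show False by blast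
        qed
        moreover have "(\<forall>i j. i < j \<longrightarrow> j < k \<longrightarrow> (a (s i), s j) \<in> edges G) \<or> (\<forall>i j. i < j \<longrightarrow> j < k \<longrightarrow> (a (s i), s j) \<notin> edges G)"
          using split[of "\<lambda>c. fst c"] by (simp add: col_def)
        ultimately show ?thesis by blast
      qed
      have nP2: "\<forall>i j. i < j \<longrightarrow> j < k \<longrightarrow> (b (s i), s j) \<notin> edges G"
      proof -
        have "\<not> (\<forall>i j. i < j \<longrightarrow> j < k \<longrightarrow> (b (s i), s j) \<in> edges G)"
        proof
          assume h: "\<forall>i j. i < j \<longrightarrow> j < k \<longrightarrow> (b (s i), s j) \<in> edges G"
          have "found G n" by (rule star[of "{1..<k}" "b (s 0)"]) (use h k2 in auto)
          with nf show False by blast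
        qed
        moreover have "(\<forall>i j. i < j \<longrightarrow> j < k \<longrightarrow> (b (s i), s j) \<in> edges G) \<or> (\<forall>i j. i < j \<longrightarrow> j < k \<longrightarrow> (b (s i), s j) \<notin> edges G)"
          using split[of "\<lambda>c. fst (snd c)"] by (simp add: col_def)
        ultimately show ?thesis by blast
      qed
      have nP3: "\<forall>i j. i < j \<longrightarrow> j < k \<longrightarrow> (a (s j), s i) \<notin> edges G"
      proof -
        have "\<not> (\<forall>i j. i < j \<longrightarrow> j < k \<longrightarrow> (a (s j), s i) \<in> edges G)"
        proof
          assume h: "\<forall>i j. i < j \<longrightarrow> j < k \<longrightarrow> (a (s j), s i) \<in> edges G"
          have "found G n" by (rule star[of "{..<k - 1}" "a (s (k - 1))"]) (use h k2 in auto)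
          with nf show False by blast
        qed
        moreover have "(\<forall>i j. i < j \<longrightarrow> j < k \<longrightarrow> (a (s j), s i) \<in> edges G) \<or> (\<forall>i j. i < j \<longrightarrow> j < k \<longrightarrow> (a (s j), s i) \<notin> edges G)"
          using split[of "\<lambda>c. fst (snd (snd c))"] by (simp add: col_def)
        ultimately show ?thesis by blast
      qed
      have nP4: "\<forall>i j. i < j \<longrightarrow> j < k \<longrightarrow> (b (s j), s i) \<notin> edges G"
      proof -
        have "\<not> (\<forall>i j. i < j \<longrightarrow> j < k \<longrightarrow> (b (s j), s i) \<in> edges G)"
        proof
          assume h: "\<forall>i j. i < j \<longrightarrow> j < k \<longrightarrow> (b (s j), s i) \<in> edges G"
          have "found G n" by (rule star[of "{..<k - 1}" "b (s (k - 1))"]) (use h k2 in auto)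
          with nf show False by blast
        qed
        moreover have "(\<forall>i j. i < j \<longrightarrow> j < k \<longrightarrow> (b (s j), s i) \<in> edges G) \<or> (\<forall>i j. i < j \<longrightarrow> j < k \<longrightarrow> (b (s j), s i) \<notin> edges G)"
          using split[of "\<lambda>c. fst (snd (snd (snd c)))"] by (simp add: col_def)
        ultimately show ?thesis by blast
      qed
      have NA: "(a (s i), s j) \<notin> edges G" if "i < k" "j < k" "i \<noteq> j" for i j
      proof (cases "i < j")
        case True then show ?thesis using nP1 that by blast
      next
        case False then have "j < i" using that by simp
        then show ?thesis using nP3 that by blast
      qed
      have NB: "(b (s i), s j) \<notin> edges G" if "i < k" "j < k" "i \<noteq> j" for i j
      proof (cases "i < j")
        case True then show ?thesis using nP2 that by blast
      next
        case False then have "j < i" using that by simp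
        then show ?thesis using nP4 that by blast
      qed
      have dA: "a (s i) \<noteq> a (s j)" if "i < k" "j < k" "i \<noteq> j" for i j
        using NA[OF that] sa(2)[OF that(2)] by metis
      have dB: "b (s i) \<noteq> b (s j)" if "i < k" "j < k" "i \<noteq> j" for i j
        using NB[OF that] sb(2)[OF that(2)] by metis
      have nk: "i < k" if "i < n" for i using that k2 by simp
      have cpA: "\<forall>i<n. \<forall>j<n. (a (s i), s j) \<in> edges G \<longleftrightarrow> i = j"
      proof (intro allI impI)
        fix i j assume ij: "i < n" "j < n"
        show "(a (s i), s j) \<in> edges G \<longleftrightarrow> i = j"
        proof (cases "i = j")
          case True then show ?thesis using sa(2) nk ij by simp
        next
          case False then show ?thesis using NA[of i j] nk ij by simp
        qed
      qed
      have cpB: "\<forall>i<n. \<forall>j<n. (b (s i), s j) \<in> edges G \<longleftrightarrow> i = j"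
      proof (intro allI impI)
        fix i j assume ij: "i < n" "j < n"
        show "(b (s i), s j) \<in> edges G \<longleftrightarrow> i = j"
        proof (cases "i = j")
          case True then show ?thesis using sb(2) nk ij by simp
        next
          case False then show ?thesis using NB[of i j] nk ij by simp
        qed
      qed
      have nQ1: "\<forall>i j. i < j \<longrightarrow> j < k \<longrightarrow> (a (s i), a (s j)) \<notin> edges G"
      proof -
        have "\<not> (\<forall>i j. i < j \<longrightarrow> j < k \<longrightarrow> (a (s i), a (s j)) \<in> edges G)"
        proof
          assume h: "\<forall>i j. i < j \<longrightarrow> j < k \<longrightarrow> (a (s i), a (s j)) \<in> edges G"
          then have h': "\<forall>i j. i < j \<longrightarrow> j < n \<longrightarrow> (a (s i), a (s j)) \<in> edges G" using nk by blast
          have "induced_sub (Kstar n) G"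
          proof (rule emb_Kstar[OF wf])
            show "\<forall>i<n. a (s i) \<in> verts G" "\<forall>i<n. s i \<in> verts G" using sa(3) sV nk by blast+
            show "\<forall>i<n. \<forall>j<n. i \<noteq> j \<longrightarrow> (a (s i), a (s j)) \<in> edges G"
              using sym_in[OF wf, of n "\<lambda>i. a (s i)" "\<lambda>i. a (s i)", OF h'] by blast
            show "\<forall>i<n. \<forall>j<n. i \<noteq> j \<longrightarrow> (s i, s j) \<notin> edges G" using ind nk by blast
            show "\<forall>i<n. \<forall>j<n. (a (s i), s j) \<in> edges G \<longleftrightarrow> i = j" by (rule cpA)
          qed
          then have "found G n" by (simp add: found_def)
          with nf show False by blast
        qed
        moreover have "(\<forall>i j. i < j \<longrightarrow> j < k \<longrightarrow> (a (s i), a (s j)) \<in> edges G) \<or> (\<forall>i j. i < j \<longrightarrow> j < k \<longrightarrow> (a (s i), a (s j)) \<notin> edges G)"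
          using split[of "\<lambda>c. fst (snd (snd (snd (snd c))))"] by (simp add: col_def)
        ultimately show ?thesis by blast
      qed
      have nQ2: "\<forall>i j. i < j \<longrightarrow> j < k \<longrightarrow> (b (s i), b (s j)) \<notin> edges G"
      proof -
        have "\<not> (\<forall>i j. i < j \<longrightarrow> j < k \<longrightarrow> (b (s i), b (s j)) \<in> edges G)"
        proof
          assume h: "\<forall>i j. i < j \<longrightarrow> j < k \<longrightarrow> (b (s i), b (s j)) \<in> edges G"
          then have h': "\<forall>i j. i < j \<longrightarrow> j < n \<longrightarrow> (b (s i), b (s j)) \<in> edges G" using nk by blast
          have "induced_sub (Kstar n) G"
          proof (rule emb_Kstar[OF wf])
            show "\<forall>i<n. b (s i) \<in> verts G" "\<forall>i<n. s i \<in> verts G" using sb(3) sV nk by blast+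
            show "\<forall>i<n. \<forall>j<n. i \<noteq> j \<longrightarrow> (b (s i), b (s j)) \<in> edges G"
              using sym_in[OF wf, of n "\<lambda>i. b (s i)" "\<lambda>i. b (s i)", OF h'] by blast
            show "\<forall>i<n. \<forall>j<n. i \<noteq> j \<longrightarrow> (s i, s j) \<notin> edges G" using ind nk by blast
            show "\<forall>i<n. \<forall>j<n. (b (s i), s j) \<in> edges G \<longleftrightarrow> i = j" by (rule cpB)
          qed
          then have "found G n" by (simp add: found_def)
          with nf show False by blast
        qed
        moreover have "(\<forall>i j. i < j \<longrightarrow> j < k \<longrightarrow> (b (s i), b (s j)) \<in> edges G) \<or> (\<forall>i j. i < j \<longrightarrow> j < k \<longrightarrow> (b (s i), b (s j)) \<notin> edges G)"
          using split[of "\<lambda>c. fst (snd (snd (snd (snd (snd c)))))"] by (simp add: col_def)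
        ultimately show ?thesis by blast
      qed
      have NAA: "(a (s i), a (s j)) \<notin> edges G" if "i < k" "j < k" "i \<noteq> j" for i j
        using sym_notin[OF wf, of k "\<lambda>i. a (s i)" "\<lambda>i. a (s i)", OF nQ1 that] by simp
      have NBB: "(b (s i), b (s j)) \<notin> edges G" if "i < k" "j < k" "i \<noteq> j" for i j
        using sym_notin[OF wf, of k "\<lambda>i. b (s i)" "\<lambda>i. b (s i)", OF nQ2 that] by simp
      have kk: "k - 1 < k" "k - 2 < k" "k - 1 \<noteq> k - 2" "i < k - 2" "i < k - 1" if "i < n" for i
        using k2 that by auto
      have nQ3: "\<forall>i j. i < j \<longrightarrow> j < k \<longrightarrow> (a (s i), b (s j)) \<notin> edges G"
      proof -
        have "\<not> (\<forall>i j. i < j \<longrightarrow> j < k \<longrightarrow> (a (s i), b (s j)) \<in> edges G)"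
        proof
          assume h: "\<forall>i j. i < j \<longrightarrow> j < k \<longrightarrow> (a (s i), b (s j)) \<in> edges G"
          have "induced_sub (K2n n) G"
          proof (rule emb_K2n[OF wf, of "b (s (k - 1))" "b (s (k - 2))" n "\<lambda>i. a (s i)"])
            show "b (s (k - 1)) \<in> verts G" "b (s (k - 2)) \<in> verts G" using sb(3) k2 by auto
            show "\<forall>i<n. a (s i) \<in> verts G" using sa(3) nk by blast
            show "b (s (k - 1)) \<noteq> b (s (k - 2))" using dB k2 by auto
            show "(b (s (k - 1)), b (s (k - 2))) \<notin> edges G" using NBB k2 by auto
            show "\<forall>i<n. (b (s (k - 1)), a (s i)) \<in> edges G"
            proof (intro allI impI)
              fix i assume "i < n"
              then have "(a (s i), b (s (k - 1))) \<in> edges G" using h kk by blast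
              then show "(b (s (k - 1)), a (s i)) \<in> edges G" using sy by blast
            qed
            show "\<forall>i<n. (b (s (k - 2)), a (s i)) \<in> edges G"
            proof (intro allI impI)
              fix i assume "i < n"
              then have "(a (s i), b (s (k - 2))) \<in> edges G" using h kk by blast
              then show "(b (s (k - 2)), a (s i)) \<in> edges G" using sy by blast
            qed
            show "\<forall>i<n. \<forall>j<n. i \<noteq> j \<longrightarrow> (a (s i), a (s j)) \<notin> edges G \<and> a (s i) \<noteq> a (s j)"
              using NAA dA nk by blast
          qed
          then have "found G n" by (simp add: found_def)
          with nf show False by blast
        qed
        moreover have "(\<forall>i j. i < j \<longrightarrow> j < k \<longrightarrow> (a (s i), b (s j)) \<in> edges G) \<or> (\<forall>i j. i < j \<longrightarrow> j < k \<longrightarrow> (a (s i), b (s j)) \<notin> edges G)"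
          using split[of "\<lambda>c. fst (snd (snd (snd (snd (snd (snd c))))))"] by (simp add: col_def)
        ultimately show ?thesis by blast
      qed
      have nQ4: "\<forall>i j. i < j \<longrightarrow> j < k \<longrightarrow> (b (s i), a (s j)) \<notin> edges G"
      proof -
        have "\<not> (\<forall>i j. i < j \<longrightarrow> j < k \<longrightarrow> (b (s i), a (s j)) \<in> edges G)"
        proof
          assume h: "\<forall>i j. i < j \<longrightarrow> j < k \<longrightarrow> (b (s i), a (s j)) \<in> edges G"
          have "induced_sub (K2n n) G"
          proof (rule emb_K2n[OF wf, of "a (s (k - 1))" "a (s (k - 2))" n "\<lambda>i. b (s i)"])
            show "a (s (k - 1)) \<in> verts G" "a (s (k - 2)) \<in> verts G" using sa(3) k2 by auto
            show "\<forall>i<n. b (s i) \<in> verts G" using sb(3) nk by blast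
            show "a (s (k - 1)) \<noteq> a (s (k - 2))" using dA k2 by auto
            show "(a (s (k - 1)), a (s (k - 2))) \<notin> edges G" using NAA k2 by auto
            show "\<forall>i<n. (a (s (k - 1)), b (s i)) \<in> edges G"
            proof (intro allI impI)
              fix i assume "i < n"
              then have "(b (s i), a (s (k - 1))) \<in> edges G" using h kk by blast
              then show "(a (s (k - 1)), b (s i)) \<in> edges G" using sy by blast
            qed
            show "\<forall>i<n. (a (s (k - 2)), b (s i)) \<in> edges G"
            proof (intro allI impI)
              fix i assume "i < n"
              then have "(b (s i), a (s (k - 2))) \<in> edges G" using h kk by blast
              then show "(a (s (k - 2)), b (s i)) \<in> edges G" using sy by blast
            qed
            show "\<forall>i<n. \<forall>j<n. i \<noteq> j \<longrightarrow> (b (s i), b (s j)) \<notin> edges G \<and> b (s i) \<noteq> b (s j)"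
              using NBB dB nk by blast
          qed
          then have "found G n" by (simp add: found_def)
          with nf show False by blast
        qed
        moreover have "(\<forall>i j. i < j \<longrightarrow> j < k \<longrightarrow> (b (s i), a (s j)) \<in> edges G) \<or> (\<forall>i j. i < j \<longrightarrow> j < k \<longrightarrow> (b (s i), a (s j)) \<notin> edges G)"
          using split[of "\<lambda>c. snd (snd (snd (snd (snd (snd (snd c))))))"] by (simp add: col_def)
        ultimately show ?thesis by blast
      qed
      have NAB: "(a (s i), b (s j)) \<notin> edges G" if "i < k" "j < k" "i \<noteq> j" for i j
      proof (cases "i < j")
        case True then show ?thesis using nQ3 that by blast
      next
        case False then have "j < i" using that by simp
        then have "(b (s j), a (s i)) \<notin> edges G" using nQ4 that by blast
        then show ?thesis using sy by blast
      qed
      have "induced_sub (nP3 n) G"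
      proof (rule emb_nP3[OF wf])
        show "\<forall>i<n. a (s i) \<in> verts G" "\<forall>i<n. s i \<in> verts G" "\<forall>i<n. b (s i) \<in> verts G"
          using sa(3) sb(3) sV nk by blast+
        show "\<forall>i<n. (s i, a (s i)) \<in> edges G" "\<forall>i<n. (s i, b (s i)) \<in> edges G"
          using sa(1) sb(1) nk by blast+
        show "\<forall>i<n. (a (s i), b (s i)) \<notin> edges G \<and> a (s i) \<noteq> b (s i)" using sab nk by blast
        show "\<forall>i<n. \<forall>j<n. i \<noteq> j \<longrightarrow> (\<forall>u\<in>{a (s i), s i, b (s i)}. \<forall>w\<in>{a (s j), s j, b (s j)}. (u, w) \<notin> edges G)"
        proof (intro allI impI)
          fix i j assume ij: "i < n" "j < n" "i \<noteq> j"
          then have ij': "i < k" "j < k" "j \<noteq> i" using nk by auto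
          have f1: "(a (s i), a (s j)) \<notin> edges G" using NAA ij' by blast
          have f2: "(a (s i), s j) \<notin> edges G" using NA ij' by blast
          have f3: "(a (s i), b (s j)) \<notin> edges G" using NAB ij' by blast
          have f4: "(s i, a (s j)) \<notin> edges G" using NA[OF ij'(2,1,3)] sy by blast
          have f5: "(s i, s j) \<notin> edges G" using ind ij' by blast
          have f6: "(s i, b (s j)) \<notin> edges G" using NB[OF ij'(2,1,3)] sy by blast
          have f7: "(b (s i), a (s j)) \<notin> edges G" using NAB[OF ij'(2,1,3)] sy by blast
          have f8: "(b (s i), s j) \<notin> edges G" using NB ij' by blast
          have f9: "(b (s i), b (s j)) \<notin> edges G" using NBB ij' by blast
          show "\<forall>u\<in>{a (s i), s i, b (s i)}. \<forall>w\<in>{a (s j), s j, b (s j)}. (u, w) \<notin> edges G"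
            using f1 f2 f3 f4 f5 f6 f7 f8 f9 by simp
        qed
      qed
      then have "found G n" by (simp add: found_def)
      with nf show False by blast
    qed
  qed
qed


lemma finite_badset: "wf_graph G \<Longrightarrow> finite (badset G)"
  unfolding badset_def wf_graph_def by auto

lemma main_lemma:
  fixes n :: nat
  shows "\<exists>N. \<forall>G::nat graph. wf_graph G \<longrightarrow> N \<le> card (badset G) \<longrightarrow> found G n"
proof -
  obtain RC where RC: "\<forall>(G::nat graph) K. wf_graph G \<longrightarrow> K \<subseteq> badset G \<longrightarrow>
     (\<forall>u\<in>K. \<forall>v\<in>K. u \<noteq> v \<longrightarrow> (u, v) \<in> edges G) \<longrightarrow> finite K \<longrightarrow> RC \<le> card K \<longrightarrow> found G n"
    using clique_lemma[of n] by (elim exE) (rule that)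
  obtain RP where RP: "\<forall>(G::nat graph) I. wf_graph G \<longrightarrow> I \<subseteq> badset G \<longrightarrow>
     (\<forall>u\<in>I. \<forall>v\<in>I. (u, v) \<notin> edges G) \<longrightarrow> finite I \<longrightarrow> RP \<le> card I \<longrightarrow> found G n"
    using p3_lemma[of n] by (elim exE) (rule that)
  define k where "k = max RC RP"
  obtain N where N: "\<forall>(S::nat set) (col::nat \<Rightarrow> nat \<Rightarrow> bool). finite S \<longrightarrow> N \<le> card S \<longrightarrow>
     (\<exists>s. (\<forall>i<k. s i \<in> S) \<and> (\<forall>i j. i < j \<longrightarrow> j < k \<longrightarrow> s i \<noteq> s j) \<and>
          (\<forall>i j i' j'. i < j \<longrightarrow> j < k \<longrightarrow> i' < j' \<longrightarrow> j' < k \<longrightarrow> col (s i) (s j) = col (s i') (s j')))"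
    using ramsey_seq[where 'b = bool and k = k] by (elim exE) (rule that)
  show ?thesis
  proof (rule exI[of _ N], intro allI impI)
    fix G :: "nat graph"
    assume wf: "wf_graph G" and cB: "N \<le> card (badset G)"
    have ir: "(x, x) \<notin> edges G" for x using wf_irr[OF wf] .
    define col where "col u v = ((u, v) \<in> edges G)" for u v
    obtain s where sB: "\<forall>i<k. s i \<in> badset G" and sinj: "\<forall>i j. i < j \<longrightarrow> j < k \<longrightarrow> s i \<noteq> s j"
      and hom: "\<forall>i j i' j'. i < j \<longrightarrow> j < k \<longrightarrow> i' < j' \<longrightarrow> j' < k \<longrightarrow> col (s i) (s j) = col (s i') (s j')"
      using N[rule_format, of "badset G" col, OF finite_badset[OF wf] cB] by (elim exE conjE) (rule that)
    have sne: "s i \<noteq> s j" if "i < k" "j < k" "i \<noteq> j" for i j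
      using neq_cases_sym[of k "\<lambda>i j. s i \<noteq> s j", OF sinj _ that] by metis
    have inj: "inj_on s {..<k}" by (rule inj_onI) (use sne in blast)
    have cardK: "card (s ` {..<k}) = k" using card_image[OF inj] by simp
    have sub: "s ` {..<k} \<subseteq> badset G" using sB by blast
    have fin: "finite (s ` {..<k})" by simp
    have split: "(\<forall>i j. i < j \<longrightarrow> j < k \<longrightarrow> col (s i) (s j)) \<or> (\<forall>i j. i < j \<longrightarrow> j < k \<longrightarrow> \<not> col (s i) (s j))"
      by (rule hom_split[where col = col and s = s and k = k and Q = "\<lambda>b. b", OF hom])
    then show "found G n"
    proof
      assume h: "\<forall>i j. i < j \<longrightarrow> j < k \<longrightarrow> col (s i) (s j)"
      have h': "\<forall>i j. i < j \<longrightarrow> j < k \<longrightarrow> (s i, s j) \<in> edges G" using h by (simp add: col_def)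
      have cl: "\<forall>u\<in>s ` {..<k}. \<forall>v\<in>s ` {..<k}. u \<noteq> v \<longrightarrow> (u, v) \<in> edges G"
      proof (intro ballI impI)
        fix u v assume "u \<in> s ` {..<k}" "v \<in> s ` {..<k}" "u \<noteq> v"
        then obtain i j where "i < k" "j < k" "u = s i" "v = s j" "i \<noteq> j" by blast
        then show "(u, v) \<in> edges G" using sym_in[OF wf, of k s s, OF h'] by blast
      qed
      have "RC \<le> card (s ` {..<k})" using cardK by (simp add: k_def)
      then show ?thesis using RC wf sub cl fin by blast
    next
      assume h: "\<forall>i j. i < j \<longrightarrow> j < k \<longrightarrow> \<not> col (s i) (s j)"
      have h': "\<forall>i j. i < j \<longrightarrow> j < k \<longrightarrow> (s i, s j) \<notin> edges G" using h by (simp add: col_def)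
      have id: "\<forall>u\<in>s ` {..<k}. \<forall>v\<in>s ` {..<k}. (u, v) \<notin> edges G"
      proof (intro ballI)
        fix u v assume "u \<in> s ` {..<k}" "v \<in> s ` {..<k}"
        then obtain i j where ij: "i < k" "j < k" "u = s i" "v = s j" by blast
        show "(u, v) \<notin> edges G"
        proof (cases "i = j")
          case True then show ?thesis using ij ir by simp
        next
          case False then show ?thesis using ij sym_notin[OF wf, of k s s, OF h'] by blast
        qed
      qed
      have "RP \<le> card (s ` {..<k})" using cardK by (simp add: k_def)
      then show ?thesis using RP wf sub id fin by blast
    qed
  qed
qed


lemma wf_mk: "finite V \<Longrightarrow> wf_graph (mk_graph V P)"
  unfolding wf_graph_def by auto

lemma pendant_bad:
  assumes fin: "finite (verts G)" and v: "v \<in> verts G"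
    and a: "a \<in> nbhd G v" and b: "b \<in> nbhd G v" and ab: "a \<noteq> b"
    and no: "\<forall>y\<in>nbhd G v. (a, y) \<notin> edges G"
  shows "v \<in> badset G"
proof -
  define C where "C x = {y \<in> nbhd G v. (x, y) \<in> (nrel G v)\<^sup>*}" for x
  have Ca: "C a = {a}"
  proof -
    have "y = a" if "(a, y) \<in> (nrel G v)\<^sup>*" for y
      using that
    proof (cases rule: converse_rtranclE)
      case (step z)
      then have "(a, z) \<in> edges G" "z \<in> nbhd G v" by (auto simp: nrel_def)
      then show ?thesis using no by blast
    qed simp
    then show ?thesis using a unfolding C_def by auto
  qed
  have Cb: "b \<in> C b" using b unfolding C_def by simp
  have comp: "components (induced G (nbhd G v)) = C ` nbhd G v"
    unfolding components_nbhd C_def by simp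
  have "C a \<noteq> C b" using Ca Cb ab by auto
  moreover have "{C a, C b} \<subseteq> components (induced G (nbhd G v))" using comp a b by auto
  moreover have "finite (components (induced G (nbhd G v)))"
  proof -
    have "nbhd G v \<subseteq> verts G" by (auto simp: nbhd_def)
    then have "finite (nbhd G v)" using fin finite_subset by blast
    then show ?thesis using comp by simp
  qed
  ultimately have "2 \<le> card (components (induced G (nbhd G v)))"
    using card_mono[of "components (induced G (nbhd G v))" "{C a, C b}"] by simp
  then show ?thesis using v by (simp add: badset_def)
qed

lemma mk_bad:
  assumes fin: "finite V" and v: "v \<in> V" and a: "a \<in> V" and b: "b \<in> V"
    and d: "a \<noteq> v" "b \<noteq> v" "a \<noteq> b"
    and va: "P v a \<or> P a v" and vb: "P v b \<or> P b v"
    and no: "\<And>y. y \<in> V \<Longrightarrow> y \<noteq> a \<Longrightarrow> y \<noteq> v \<Longrightarrow> P a y \<or> P y a \<Longrightarrow> \<not> (P v y \<or> P y v)"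
  shows "v \<in> badset (mk_graph V P)"
proof (rule pendant_bad[where a = a and b = b])
  show "finite (verts (mk_graph V P))" "v \<in> verts (mk_graph V P)" using fin v by auto
  show "a \<in> nbhd (mk_graph V P) v" "b \<in> nbhd (mk_graph V P) v" using a b d va vb v by (auto simp: nbhd_def)
  show "a \<noteq> b" by (rule d(3))
  show "\<forall>y\<in>nbhd (mk_graph V P) v. (a, y) \<notin> edges (mk_graph V P)"
    using no by (auto simp: nbhd_def)
qed

lemma card_bad_ge:
  assumes "wf_graph G" "A \<subseteq> badset G" "card A = n"
  shows "n \<le> card (badset G)"
proof -
  have "finite (badset G)" using assms(1) unfolding badset_def wf_graph_def by auto
  then show ?thesis using card_mono assms(2,3) by blast
qed

lemma Kstar_bad: assumes "2 \<le> n" shows "n \<le> card (badset (Kstar n))"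
proof (rule card_bad_ge[of _ "{..<n}"])
  show "wf_graph (Kstar n)" unfolding Kstar_def by (rule wf_mk) simp
  show "card {..<n} = n" by simp
  show "{..<n} \<subseteq> badset (Kstar n)"
  proof
    fix i assume i: "i \<in> {..<n}"
    show "i \<in> badset (Kstar n)" unfolding Kstar_def
      by (rule mk_bad[where a = "i + n" and b = "if i = 0 then 1 else 0"]) (use i assms in auto)
  qed
qed

lemma CK_bad: assumes "2 \<le> n" shows "n \<le> card (badset (CK n))"
proof (rule card_bad_ge[of _ "{..<n}"])
  show "wf_graph (CK n)" unfolding CK_def by (rule wf_mk) simp
  show "card {..<n} = n" by simp
  show "{..<n} \<subseteq> badset (CK n)"
  proof
    fix i assume i: "i \<in> {..<n}"
    show "i \<in> badset (CK n)" unfolding CK_def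
      by (rule mk_bad[where a = "i + n" and b = "if i = 0 then 1 else 0"]) (use i assms in auto)
  qed
qed

lemma nP3_bad: shows "n \<le> card (badset (nP3 n))"
proof (rule card_bad_ge[of _ "(\<lambda>j. 3 * j + 1) ` {..<n}"])
  show "wf_graph (nP3 n)" unfolding nP3_def by (rule wf_mk) simp
  show "card ((\<lambda>j. 3 * j + 1) ` {..<n}) = n" by (subst card_image) (auto simp: inj_on_def)
  show "(\<lambda>j. 3 * j + 1) ` {..<n} \<subseteq> badset (nP3 n)"
  proof
    fix v assume "v \<in> (\<lambda>j. 3 * j + 1) ` {..<n}"
    then obtain j where j: "j < n" "v = 3 * j + 1" by auto
    have d: "(3*j+1) div 3 = j" "(3*j+2) div 3 = j" "(3*j+1) mod 3 = 1" "(3*j+2) mod 3 = 2"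
      "(3*j) div 3 = j" "(3*j) mod 3 = 0" by presburger+
    show "v \<in> badset (nP3 n)" unfolding nP3_def j(2)
    proof (rule mk_bad[where a = "3 * j" and b = "3 * j + 2"])
      fix y assume "y \<in> {..<3 * n}" "y \<noteq> 3 * j" "y \<noteq> 3 * j + 1"
        "3 * j div 3 = y div 3 \<and> 3 * j mod 3 = 1 \<or> y div 3 = 3 * j div 3 \<and> y mod 3 = 1"
      moreover have "y = 3 * (y div 3) + y mod 3" by simp
      ultimately show "\<not> ((3 * j + 1) div 3 = y div 3 \<and> (3 * j + 1) mod 3 = 1 \<or> y div 3 = (3 * j + 1) div 3 \<and> y mod 3 = 1)"
        by auto
    qed (use j d in auto)
  qed
qed

lemma K1nstar_bad: shows "n \<le> card (badset (K1nstar n))"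
proof (rule card_bad_ge[of _ "{1..n}"])
  show "wf_graph (K1nstar n)" unfolding K1nstar_def by (rule wf_mk) simp
  show "card {1..n} = n" by simp
  show "{1..n} \<subseteq> badset (K1nstar n)"
  proof
    fix i assume i: "i \<in> {1..n}"
    show "i \<in> badset (K1nstar n)" unfolding K1nstar_def
      by (rule mk_bad[where a = "i + n" and b = 0]) (use i in auto)
  qed
qed

lemma K2n_bad: shows "n \<le> card (badset (K2n n))"
proof (rule card_bad_ge[of _ "{2..n+1}"])
  show "wf_graph (K2n n)" unfolding K2n_def by (rule wf_mk) simp
  show "card {2..n+1} = n" by simp
  show "{2..n+1} \<subseteq> badset (K2n n)"
  proof
    fix i assume i: "i \<in> {2..n+1}"
    show "i \<in> badset (K2n n)" unfolding K2n_def
      by (rule mk_bad[where a = 0 and b = 1]) (use i in auto)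
  qed
qed

lemma Tn_bad: assumes "1 \<le> n" shows "n \<le> card (badset (Tn n))"
proof (rule card_bad_ge[of _ "{n..<2*n}"])
  show "wf_graph (Tn n)" unfolding Tn_def by (rule wf_mk) simp
  show "card {n..<2*n} = n" by simp
  show "{n..<2*n} \<subseteq> badset (Tn n)"
  proof
    fix i assume i: "i \<in> {n..<2*n}"
    show "i \<in> badset (Tn n)" unfolding Tn_def
      by (rule mk_bad[where a = "2 * n" and b = 0]) (use i assms in auto)
  qed
qed


theorem corollary1p10:
  fixes \<H> :: "nat graph set"
  assumes "\<forall>H\<in>\<H>. wf_graph H"
  shows "(\<exists>c::nat. \<forall>G::nat graph. wf_graph G \<and> H_free \<H> G \<longrightarrow>
            card {v \<in> verts G. card (components (induced G (nbhd G v))) \<ge> 2} < c)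
     \<longleftrightarrow> (\<exists>n::nat. n > 0 \<and>
            family_le \<H> {Kstar n, nP3 n, K1nstar n, K2n n, CK n, Tn n})"
proof -
  have bs: "{v \<in> verts G. card (components (induced G (nbhd G v))) \<ge> 2} = badset G" for G :: "nat graph"
    by (simp add: badset_def)
  show ?thesis
  proof
    assume "\<exists>c::nat. \<forall>G::nat graph. wf_graph G \<and> H_free \<H> G \<longrightarrow>
            card {v \<in> verts G. card (components (induced G (nbhd G v))) \<ge> 2} < c"
    then obtain c where c: "\<forall>G::nat graph. wf_graph G \<and> H_free \<H> G \<longrightarrow> card (badset G) < c"
      unfolding bs by blast
    show "\<exists>n::nat. n > 0 \<and> family_le \<H> {Kstar n, nP3 n, K1nstar n, K2n n, CK n, Tn n}"
    proof (rule ccontr)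
      assume "\<not> ?thesis"
      then have nf: "\<not> family_le \<H> {Kstar (c + 2), nP3 (c + 2), K1nstar (c + 2), K2n (c + 2), CK (c + 2), Tn (c + 2)}"
        by auto
      then obtain F where F: "F \<in> {Kstar (c + 2), nP3 (c + 2), K1nstar (c + 2), K2n (c + 2), CK (c + 2), Tn (c + 2)}"
        and Fr: "\<forall>H1\<in>\<H>. \<not> induced_sub H1 F"
        unfolding family_le_def by blast
      have Hf: "H_free \<H> F" using Fr unfolding H_free_def by blast
      have wfF: "wf_graph F \<and> c + 2 \<le> card (badset F)"
        using F Kstar_bad[of "c + 2"] nP3_bad[of "c + 2"] K1nstar_bad[of "c + 2"] K2n_bad[of "c + 2"]
          CK_bad[of "c + 2"] Tn_bad[of "c + 2"]
        by (auto simp: Kstar_def nP3_def K1nstar_def K2n_def CK_def Tn_def intro: wf_mk)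
      then have "card (badset F) < c" using c Hf by blast
      then show False using wfF by simp
    qed
  next
    assume "\<exists>n::nat. n > 0 \<and> family_le \<H> {Kstar n, nP3 n, K1nstar n, K2n n, CK n, Tn n}"
    then obtain n where n: "family_le \<H> {Kstar n, nP3 n, K1nstar n, K2n n, CK n, Tn n}" by blast
    obtain N where N: "\<forall>G::nat graph. wf_graph G \<longrightarrow> N \<le> card (badset G) \<longrightarrow> found G n"
      using main_lemma[of n] by blast
    show "\<exists>c::nat. \<forall>G::nat graph. wf_graph G \<and> H_free \<H> G \<longrightarrow>
            card {v \<in> verts G. card (components (induced G (nbhd G v))) \<ge> 2} < c"
    proof (rule exI[of _ N], intro allI impI)
      fix G :: "nat graph" assume G: "wf_graph G \<and> H_free \<H> G"
      show "card {v \<in> verts G. card (components (induced G (nbhd G v))) \<ge> 2} < N"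
        unfolding bs
      proof (rule ccontr)
        assume "\<not> card (badset G) < N"
        then have "N \<le> card (badset G)" by simp
        then have "found G n" using N G by blast
        then obtain F where F: "F \<in> {Kstar n, nP3 n, K1nstar n, K2n n, CK n, Tn n}" "induced_sub F G"
          unfolding found_def by blast
        then obtain H1 where "H1 \<in> \<H>" "induced_sub H1 F" using n unfolding family_le_def by blast
        then have "H1 \<in> \<H>" "induced_sub H1 G" using emb_trans F(2) by blast+
        then show False using G unfolding H_free_def by blast
      qed
    qed
  qed
qed


end
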